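(* Let $n\ge 1$ and let $M$ be a finitely generated $A$-module. Then $M$ is $n$-strongly Gorenstein-projective if and only if $\Omega^nM\cong M$ in the stable category $A\text{-}\underline{\mathrm{mod}}$ and $\mathrm{Ext}^i_A(M,A)=0$ for $1\le i\le n$.
   Context: $A$ is an artin algebra; modules are finitely generated left $A$-modules. A complex $P^\bullet$ of finitely generated projective modules is totally acyclic if it is acyclic and $\mathrm{Hom}_A(P^\bullet,A)$ is acyclic. A totally acyclic complex is $n$-strong if it is $n$-periodic: $P^{i+n}=P^i$ and $d^{i+n}=d^i$ for all $i$. $M$ is $n$-strongly Gorenstein-projective if $M\cong Z^0(P^\bullet)$ for an $n$-strong totally acyclic complex $P^\bullet$. $A\text{-}\underline{\mathrm{mod}}$ is the stable category modulo morphisms factoring through projective modules; $\Omega M$ is the kernel of an epimorphism from a projective module onto $M$ (well defined in the stable category) and $\Omega^n$ its $n$-th iterate. *)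

theory Defs
  imports Main
begin

definition ring_ideal :: "'r::comm_ring_1 set \<Rightarrow> bool" where
  "ring_ideal I \<longleftrightarrow> 0 \<in> I \<and> (\<forall>x\<in>I. \<forall>y\<in>I. x + y \<in> I) \<and> (\<forall>r. \<forall>x\<in>I. r * x \<in> I)"

definition artinian_ring :: "'r::comm_ring_1 itself \<Rightarrow> bool" where
  "artinian_ring _ \<longleftrightarrow>
     (\<forall>I :: nat \<Rightarrow> 'r set. (\<forall>k. ring_ideal (I k) \<and> I (Suc k) \<subseteq> I k)
        \<longrightarrow> (\<exists>N. \<forall>m\<ge>N. I m = I N))"

text \<open>The ring A (the whole type 'a) is an artin algebra over the commutative artinian
  ring R (the whole type 'r) via the structure map phi: phi is a unital ring homomorphism
  into the centre of A, and A is finitely generated as an R-module.\<close>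
definition artin_algebra :: "('r::comm_ring_1 \<Rightarrow> 'a::ring_1) \<Rightarrow> bool" where
  "artin_algebra phi \<longleftrightarrow>
     artinian_ring TYPE('r) \<and>
     phi 1 = 1 \<and> (\<forall>x y. phi (x + y) = phi x + phi y) \<and> (\<forall>x y. phi (x * y) = phi x * phi y) \<and>
     (\<forall>r a. phi r * a = a * phi r) \<and>
     (\<exists>S. finite S \<and> (\<forall>a. \<exists>c. a = (\<Sum>s\<in>S. phi (c s) * s)))"

record ('a, 'm) lmod =
  lcarrier :: "'m set"
  ladd :: "'m \<Rightarrow> 'm \<Rightarrow> 'm"
  lzero :: "'m"
  lsmult :: "'a \<Rightarrow> 'm \<Rightarrow> 'm"

definition lmodule :: "('a::ring_1, 'm) lmod \<Rightarrow> bool" where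
  "lmodule M \<longleftrightarrow>
     lzero M \<in> lcarrier M \<and>
     (\<forall>x\<in>lcarrier M. \<forall>y\<in>lcarrier M. ladd M x y \<in> lcarrier M) \<and>
     (\<forall>a. \<forall>x\<in>lcarrier M. lsmult M a x \<in> lcarrier M) \<and>
     (\<forall>x\<in>lcarrier M. \<forall>y\<in>lcarrier M. \<forall>z\<in>lcarrier M. ladd M (ladd M x y) z = ladd M x (ladd M y z)) \<and>
     (\<forall>x\<in>lcarrier M. \<forall>y\<in>lcarrier M. ladd M x y = ladd M y x) \<and>
     (\<forall>x\<in>lcarrier M. ladd M (lzero M) x = x) \<and>
     (\<forall>x\<in>lcarrier M. \<exists>y\<in>lcarrier M. ladd M x y = lzero M) \<and>
     (\<forall>a. \<forall>x\<in>lcarrier M. \<forall>y\<in>lcarrier M. lsmult M a (ladd M x y) = ladd M (lsmult M a x) (lsmult M a y)) \<and>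
     (\<forall>a b. \<forall>x\<in>lcarrier M. lsmult M (a + b) x = ladd M (lsmult M a x) (lsmult M b x)) \<and>
     (\<forall>a b. \<forall>x\<in>lcarrier M. lsmult M (a * b) x = lsmult M a (lsmult M b x)) \<and>
     (\<forall>x\<in>lcarrier M. lsmult M 1 x = x)"

definition lsub :: "('a::ring_1, 'm) lmod \<Rightarrow> 'm \<Rightarrow> 'm \<Rightarrow> 'm" where
  "lsub M x y = ladd M x (lsmult M (-1) y)"

definition submodule :: "'m set \<Rightarrow> ('a::ring_1, 'm) lmod \<Rightarrow> bool" where
  "submodule N M \<longleftrightarrow> N \<subseteq> lcarrier M \<and> lzero M \<in> N \<and>
     (\<forall>x\<in>N. \<forall>y\<in>N. ladd M x y \<in> N) \<and> (\<forall>a. \<forall>x\<in>N. lsmult M a x \<in> N)"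

definition fin_gen :: "('a::ring_1, 'm) lmod \<Rightarrow> bool" where
  "fin_gen M \<longleftrightarrow> (\<exists>S. finite S \<and> S \<subseteq> lcarrier M \<and>
     (\<forall>N. submodule N M \<and> S \<subseteq> N \<longrightarrow> N = lcarrier M))"

text \<open>A-linear maps (only their values on the carrier matter).\<close>
definition lhom :: "('a::ring_1, 'm) lmod \<Rightarrow> ('a, 'n) lmod \<Rightarrow> ('m \<Rightarrow> 'n) set" where
  "lhom M N = {f. (\<forall>x\<in>lcarrier M. f x \<in> lcarrier N) \<and>
     (\<forall>x\<in>lcarrier M. \<forall>y\<in>lcarrier M. f (ladd M x y) = ladd N (f x) (f y)) \<and>
     (\<forall>a. \<forall>x\<in>lcarrier M. f (lsmult M a x) = lsmult N a (f x))}"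

definition lmod_iso :: "('a::ring_1, 'm) lmod \<Rightarrow> ('a, 'n) lmod \<Rightarrow> bool" where
  "lmod_iso M N \<longleftrightarrow> (\<exists>f\<in>lhom M N. bij_betw f (lcarrier M) (lcarrier N))"

definition lkernel :: "('a::ring_1, 'm) lmod \<Rightarrow> ('a, 'n) lmod \<Rightarrow> ('m \<Rightarrow> 'n) \<Rightarrow> ('a, 'm) lmod" where
  "lkernel M N f = M\<lparr>lcarrier := {x \<in> lcarrier M. f x = lzero N}\<rparr>"

definition regmod :: "('a::ring_1, 'a) lmod" where
  "regmod = \<lparr>lcarrier = UNIV, ladd = (+), lzero = 0, lsmult = (*)\<rparr>"

text \<open>All auxiliary modules (projectives, syzygies, complexes) are realised with elements
  in the type nat \<Rightarrow> 'a, which contains a copy of every free module A^m and hence (up to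
  isomorphism) every finitely generated module appearing below. Projectivity is the lifting
  property against all epimorphisms between modules of this type.\<close>
definition fg_projective :: "('a::ring_1, nat \<Rightarrow> 'a) lmod \<Rightarrow> bool" where
  "fg_projective P \<longleftrightarrow> lmodule P \<and> fin_gen P \<and>
     (\<forall>(X :: ('a, nat \<Rightarrow> 'a) lmod) (Y :: ('a, nat \<Rightarrow> 'a) lmod) g f.
        lmodule X \<and> lmodule Y \<and> g \<in> lhom X Y \<and> g ` lcarrier X = lcarrier Y \<and> f \<in> lhom P Y
        \<longrightarrow> (\<exists>h\<in>lhom P X. \<forall>x\<in>lcarrier P. g (h x) = f x))"

definition factors_through_proj :: "('a::ring_1, 'm) lmod \<Rightarrow> ('a, 'n) lmod \<Rightarrow> ('m \<Rightarrow> 'n) \<Rightarrow> bool" where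
  "factors_through_proj X Y h \<longleftrightarrow>
     (\<exists>(Q :: ('a, nat \<Rightarrow> 'a) lmod) u v. fg_projective Q \<and> u \<in> lhom X Q \<and> v \<in> lhom Q Y \<and>
        (\<forall>x\<in>lcarrier X. h x = v (u x)))"

definition stably_iso :: "('a::ring_1, 'm) lmod \<Rightarrow> ('a, 'n) lmod \<Rightarrow> bool" where
  "stably_iso X Y \<longleftrightarrow>
     (\<exists>f\<in>lhom X Y. \<exists>g\<in>lhom Y X.
        factors_through_proj X X (\<lambda>x. lsub X (g (f x)) x) \<and>
        factors_through_proj Y Y (\<lambda>y. lsub Y (f (g y)) y))"

definition is_syzygy :: "('a::ring_1, 'm) lmod \<Rightarrow> ('a, nat \<Rightarrow> 'a) lmod \<Rightarrow> bool" where
  "is_syzygy M N \<longleftrightarrow>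
     (\<exists>P p. fg_projective P \<and> p \<in> lhom P M \<and> p ` lcarrier P = lcarrier M \<and> N = lkernel P M p)"

text \<open>\<Omega>^n M \<cong> M in the stable category (n \<ge> 1): for some (equivalently, any) choice of
  iterated syzygies \<Omega>M, \<Omega>^2 M, ..., \<Omega>^n M.\<close>
definition syzygy_stably_iso :: "nat \<Rightarrow> ('a::ring_1, 'm) lmod \<Rightarrow> bool" where
  "syzygy_stably_iso n M \<longleftrightarrow>
     (\<exists>Om :: nat \<Rightarrow> ('a, nat \<Rightarrow> 'a) lmod.
        is_syzygy M (Om 1) \<and> (\<forall>k. 1 \<le> k \<and> k < n \<longrightarrow> is_syzygy (Om k) (Om (Suc k))) \<and>
        stably_iso (Om n) M)"

text \<open>A projective resolution  ... \<rightarrow> P 1 \<rightarrow> P 0 \<rightarrow> M \<rightarrow> 0, with d k : P (k+1) \<rightarrow> P k and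
  augmentation e : P 0 \<rightarrow> M.\<close>
definition proj_resolution ::
  "('a::ring_1, 'm) lmod \<Rightarrow> (nat \<Rightarrow> ('a, nat \<Rightarrow> 'a) lmod) \<Rightarrow> (nat \<Rightarrow> (nat \<Rightarrow> 'a) \<Rightarrow> (nat \<Rightarrow> 'a))
     \<Rightarrow> ((nat \<Rightarrow> 'a) \<Rightarrow> 'm) \<Rightarrow> bool" where
  "proj_resolution M P d e \<longleftrightarrow>
     (\<forall>k. fg_projective (P k)) \<and>
     e \<in> lhom (P 0) M \<and> e ` lcarrier (P 0) = lcarrier M \<and>
     (\<forall>k. d k \<in> lhom (P (Suc k)) (P k)) \<and>
     {x \<in> lcarrier (P 0). e x = lzero M} = d 0 ` lcarrier (P 1) \<and>
     (\<forall>k. {x \<in> lcarrier (P (Suc k)). d k x = lzero (P k)} = d (Suc k) ` lcarrier (P (Suc (Suc k))))"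

text \<open>Ext^i_A(M, A) = 0 (i \<ge> 1): the i-th cohomology of Hom_A(P, A) vanishes, where P is a
  projective resolution of M (independent of the choice of resolution).\<close>
definition ext_vanishes :: "('a::ring_1, 'm) lmod \<Rightarrow> nat \<Rightarrow> bool" where
  "ext_vanishes M i \<longleftrightarrow>
     (\<exists>P d e. proj_resolution M P d e \<and>
        (\<forall>f\<in>lhom (P i) (regmod :: ('a, 'a) lmod).
           (\<forall>x\<in>lcarrier (P (Suc i)). f (d i x) = 0) \<longrightarrow>
           (\<exists>g\<in>lhom (P (i - 1)) (regmod :: ('a, 'a) lmod). \<forall>x\<in>lcarrier (P i). f x = g (d (i - 1) x))))"

definition totally_acyclic ::
  "(int \<Rightarrow> ('a::ring_1, nat \<Rightarrow> 'a) lmod) \<Rightarrow> (int \<Rightarrow> (nat \<Rightarrow> 'a) \<Rightarrow> (nat \<Rightarrow> 'a)) \<Rightarrow> bool" where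
  "totally_acyclic P d \<longleftrightarrow>
     (\<forall>i. fg_projective (P i)) \<and>
     (\<forall>i. d i \<in> lhom (P i) (P (i + 1))) \<and>
     (\<forall>i. {x \<in> lcarrier (P (i + 1)). d (i + 1) x = lzero (P (i + 2))} = d i ` lcarrier (P i)) \<and>
     (\<forall>i. \<forall>f\<in>lhom (P i) (regmod :: ('a, 'a) lmod).
        (\<forall>x\<in>lcarrier (P (i - 1)). f (d (i - 1) x) = 0) \<longrightarrow>
        (\<exists>g\<in>lhom (P (i + 1)) (regmod :: ('a, 'a) lmod). \<forall>x\<in>lcarrier (P i). f x = g (d i x)))"

definition n_strong :: "nat \<Rightarrow> (int \<Rightarrow> ('a::ring_1, nat \<Rightarrow> 'a) lmod) \<Rightarrow> (int \<Rightarrow> (nat \<Rightarrow> 'a) \<Rightarrow> (nat \<Rightarrow> 'a)) \<Rightarrow> bool" where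
  "n_strong n P d \<longleftrightarrow> totally_acyclic P d \<and>
     (\<forall>i. P (i + int n) = P i \<and> (\<forall>x\<in>lcarrier (P i). d (i + int n) x = d i x))"

definition n_strongly_GP :: "nat \<Rightarrow> ('a::ring_1, 'm) lmod \<Rightarrow> bool" where
  "n_strongly_GP n M \<longleftrightarrow>
     (\<exists>P d. n_strong n P d \<and> lmod_iso M (lkernel (P 0) (P 1) (d 0)))"

end

theory Submission
  imports Defs
begin


lemma lmoduleD:
  assumes "lmodule M"
  shows lzero_closed: "lzero M \<in> lcarrier M"
    and ladd_closed: "\<And>x y. x \<in> lcarrier M \<Longrightarrow> y \<in> lcarrier M \<Longrightarrow> ladd M x y \<in> lcarrier M"
    and lsmult_closed: "\<And>a x. x \<in> lcarrier M \<Longrightarrow> lsmult M a x \<in> lcarrier M"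
    and ladd_assoc: "\<And>x y z. x \<in> lcarrier M \<Longrightarrow> y \<in> lcarrier M \<Longrightarrow> z \<in> lcarrier M \<Longrightarrow> ladd M (ladd M x y) z = ladd M x (ladd M y z)"
    and ladd_comm: "\<And>x y. x \<in> lcarrier M \<Longrightarrow> y \<in> lcarrier M \<Longrightarrow> ladd M x y = ladd M y x"
    and lzero_l: "\<And>x. x \<in> lcarrier M \<Longrightarrow> ladd M (lzero M) x = x"
    and linv_ex: "\<And>x. x \<in> lcarrier M \<Longrightarrow> \<exists>y\<in>lcarrier M. ladd M x y = lzero M"
    and lsmult_add_r: "\<And>a x y. x \<in> lcarrier M \<Longrightarrow> y \<in> lcarrier M \<Longrightarrow> lsmult M a (ladd M x y) = ladd M (lsmult M a x) (lsmult M a y)"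
    and lsmult_add_l: "\<And>a b x. x \<in> lcarrier M \<Longrightarrow> lsmult M (a + b) x = ladd M (lsmult M a x) (lsmult M b x)"
    and lsmult_assoc: "\<And>a b x. x \<in> lcarrier M \<Longrightarrow> lsmult M (a * b) x = lsmult M a (lsmult M b x)"
    and lsmult_one: "\<And>x. x \<in> lcarrier M \<Longrightarrow> lsmult M 1 x = x"
  using assms unfolding lmodule_def by auto

lemma lzero_r: "lmodule M \<Longrightarrow> x \<in> lcarrier M \<Longrightarrow> ladd M x (lzero M) = x"
  by (metis ladd_comm lzero_closed lzero_l)

lemma ladd_cancel_l:
  assumes M: "lmodule M" and x: "x \<in> lcarrier M" and y: "y \<in> lcarrier M" and z: "z \<in> lcarrier M"
    and e: "ladd M x y = ladd M x z"
  shows "y = z"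
proof -
  obtain w where w: "w \<in> lcarrier M" "ladd M x w = lzero M" using linv_ex[OF M x] by blast
  have "ladd M w (ladd M x y) = ladd M w (ladd M x z)" using e by simp
  hence "ladd M (ladd M w x) y = ladd M (ladd M w x) z"
    using M w x y z by (simp add: ladd_assoc)
  moreover have "ladd M w x = lzero M" using M w x by (simp add: ladd_comm)
  ultimately show ?thesis using M y z by (simp add: lzero_l)
qed

lemma lsmult_zero_l: "lmodule M \<Longrightarrow> x \<in> lcarrier M \<Longrightarrow> lsmult M 0 x = lzero M"
proof -
  assume M: "lmodule M" and x: "x \<in> lcarrier M"
  have "ladd M (lsmult M 0 x) (lsmult M 0 x) = ladd M (lsmult M 0 x) (lzero M)"
    using M x by (metis add_0 lsmult_add_l lsmult_closed lzero_r)
  thus ?thesis using M x by (meson ladd_cancel_l lsmult_closed lzero_closed)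
qed

lemma lsmult_zero_r: "lmodule M \<Longrightarrow> lsmult M a (lzero M) = lzero M"
proof -
  assume M: "lmodule M"
  have "ladd M (lsmult M a (lzero M)) (lsmult M a (lzero M)) = ladd M (lsmult M a (lzero M)) (lzero M)"
    using M by (metis lsmult_add_r lsmult_closed lzero_closed lzero_l lzero_r)
  thus ?thesis using M by (meson ladd_cancel_l lsmult_closed lzero_closed)
qed

lemma lneg_r: "lmodule M \<Longrightarrow> x \<in> lcarrier M \<Longrightarrow> ladd M x (lsmult M (-1) x) = lzero M"
  by (metis lsmult_add_l lsmult_one lsmult_zero_l right_minus)

lemma lneg_l: "lmodule M \<Longrightarrow> x \<in> lcarrier M \<Longrightarrow> ladd M (lsmult M (-1) x) x = lzero M"
  by (metis lneg_r ladd_comm lsmult_closed)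

lemma lsub_closed: "lmodule M \<Longrightarrow> x \<in> lcarrier M \<Longrightarrow> y \<in> lcarrier M \<Longrightarrow> lsub M x y \<in> lcarrier M"
  unfolding lsub_def by (simp add: ladd_closed lsmult_closed)

lemma lsub_self: "lmodule M \<Longrightarrow> x \<in> lcarrier M \<Longrightarrow> lsub M x x = lzero M"
  unfolding lsub_def by (simp add: lneg_r)

lemma lsub_zero: "lmodule M \<Longrightarrow> x \<in> lcarrier M \<Longrightarrow> lsub M x (lzero M) = x"
  unfolding lsub_def by (simp add: lsmult_zero_r lzero_r)

lemma lsub_add_cancel: "lmodule M \<Longrightarrow> x \<in> lcarrier M \<Longrightarrow> y \<in> lcarrier M \<Longrightarrow> ladd M (lsub M x y) y = x"
  unfolding lsub_def by (simp add: ladd_assoc lsmult_closed lneg_l lzero_r)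

lemma lsub_add_cancel2: "lmodule M \<Longrightarrow> x \<in> lcarrier M \<Longrightarrow> y \<in> lcarrier M \<Longrightarrow> ladd M y (lsub M x y) = x"
  by (metis lsub_add_cancel ladd_comm lsub_closed)

lemma lsub_eq_zero: "lmodule M \<Longrightarrow> x \<in> lcarrier M \<Longrightarrow> y \<in> lcarrier M \<Longrightarrow> lsub M x y = lzero M \<Longrightarrow> x = y"
  by (metis lsub_add_cancel lzero_l)

lemma lsub_add: "lmodule M \<Longrightarrow> x \<in> lcarrier M \<Longrightarrow> y \<in> lcarrier M \<Longrightarrow> lsub M (ladd M x y) y = x"
  by (metis ladd_closed ladd_cancel_l lsub_add_cancel lsub_closed ladd_comm)

lemma ladd_left_comm: "lmodule M \<Longrightarrow> x \<in> lcarrier M \<Longrightarrow> y \<in> lcarrier M \<Longrightarrow> z \<in> lcarrier M \<Longrightarrow>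
  ladd M x (ladd M y z) = ladd M y (ladd M x z)"
  by (metis ladd_assoc ladd_comm)

lemma lsmult_neg_add: "lmodule M \<Longrightarrow> x \<in> lcarrier M \<Longrightarrow> y \<in> lcarrier M \<Longrightarrow>
   lsmult M (-1) (ladd M x y) = ladd M (lsmult M (-1) x) (lsmult M (-1) y)"
  by (simp add: lsmult_add_r)

lemma lsub_sub: "lmodule M \<Longrightarrow> x \<in> lcarrier M \<Longrightarrow> y \<in> lcarrier M \<Longrightarrow> z \<in> lcarrier M \<Longrightarrow>
   lsub M x (ladd M y z) = lsub M (lsub M x y) z"
  unfolding lsub_def by (simp add: lsmult_add_r ladd_assoc lsmult_closed)

lemma lsmult_m1_m1: "lmodule M \<Longrightarrow> x \<in> lcarrier M \<Longrightarrow> lsmult M (-1) (lsmult M (-1) x) = x"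
  by (metis lsmult_assoc lsmult_one mult_minus1 minus_minus)

lemma lsub_lsub: "lmodule M \<Longrightarrow> x \<in> lcarrier M \<Longrightarrow> y \<in> lcarrier M \<Longrightarrow> lsub M x (lsub M x y) = y"
  unfolding lsub_def
  by (metis lsmult_neg_add lsmult_closed lsmult_m1_m1 ladd_assoc lneg_r lzero_l ladd_closed)

lemma submodule_lmodule:
  assumes M: "lmodule M" and N: "submodule N M"
  shows "lmodule (M\<lparr>lcarrier := N\<rparr>)"
proof -
  have sub: "N \<subseteq> lcarrier M" using N unfolding submodule_def by blast
  have inv: "\<And>x. x \<in> N \<Longrightarrow> lsmult M (-1) x \<in> N" using N unfolding submodule_def by blast
  have c: "\<And>x. x \<in> N \<Longrightarrow> x \<in> lcarrier M" using sub by blast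
  show ?thesis unfolding lmodule_def using N sub M
    apply (simp add: submodule_def)
    apply (intro conjI ballI allI)
    apply (auto simp: ladd_assoc lzero_l lsmult_add_r lsmult_add_l lsmult_assoc lsmult_one c
        intro!: bexI[of _ "lsmult M (-1) _"] lneg_r inv)
    by (metis ladd_comm c)
qed

lemma lhom_sub_target:
  "C \<subseteq> lcarrier N \<Longrightarrow> (f \<in> lhom X (N\<lparr>lcarrier := C\<rparr>)) \<longleftrightarrow> (f \<in> lhom X N \<and> (\<forall>x\<in>lcarrier X. f x \<in> C))"
  unfolding lhom_def by (auto simp: subset_iff)

lemma lhom_sub_target_sub:
  "C \<subseteq> lcarrier N \<Longrightarrow> f \<in> lhom X (N\<lparr>lcarrier := C\<rparr>) \<Longrightarrow> f \<in> lhom X N"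
  unfolding lhom_def by auto

lemma lhom_restrict:
  "C \<subseteq> lcarrier X \<Longrightarrow> f \<in> lhom X N \<Longrightarrow> f \<in> lhom (X\<lparr>lcarrier := C\<rparr>) N"
  unfolding lhom_def by (auto simp: subset_iff)

lemma lhomD:
  assumes "f \<in> lhom M N"
  shows lhom_closed: "\<And>x. x \<in> lcarrier M \<Longrightarrow> f x \<in> lcarrier N"
    and lhom_add: "\<And>x y. x \<in> lcarrier M \<Longrightarrow> y \<in> lcarrier M \<Longrightarrow> f (ladd M x y) = ladd N (f x) (f y)"
    and lhom_smult: "\<And>a x. x \<in> lcarrier M \<Longrightarrow> f (lsmult M a x) = lsmult N a (f x)"
  using assms unfolding lhom_def by blast+

lemma lhom_zero: "lmodule M \<Longrightarrow> lmodule N \<Longrightarrow> f \<in> lhom M N \<Longrightarrow> f (lzero M) = lzero N"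
  by (metis lhom_closed lhom_smult lsmult_zero_l lzero_closed)

lemma lhom_sub: "f \<in> lhom M N \<Longrightarrow> x \<in> lcarrier M \<Longrightarrow> y \<in> lcarrier M \<Longrightarrow> lmodule M \<Longrightarrow>
   f (lsub M x y) = lsub N (f x) (f y)"
  unfolding lsub_def by (simp add: lhom_add lhom_smult lsmult_closed)

lemma lhom_comp: "f \<in> lhom M N \<Longrightarrow> g \<in> lhom N K \<Longrightarrow> (\<lambda>x. g (f x)) \<in> lhom M K"
  unfolding lhom_def by auto

lemma lhom_id: "(\<lambda>x. x) \<in> lhom M M"
  unfolding lhom_def by auto

lemma lhom_zero_map: "lmodule N \<Longrightarrow> (\<lambda>x. lzero N) \<in> lhom M N"
  unfolding lhom_def by (simp add: lzero_closed lzero_l lsmult_zero_r)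

lemma lhom_ladd:
  assumes N: "lmodule N" and f: "f \<in> lhom M N" and g: "g \<in> lhom M N"
  shows "(\<lambda>x. ladd N (f x) (g x)) \<in> lhom M N"
  unfolding lhom_def
proof (intro CollectI conjI ballI allI)
  fix x assume "x \<in> lcarrier M" thus "ladd N (f x) (g x) \<in> lcarrier N"
    using N f g by (simp add: ladd_closed lhom_closed)
next
  fix x y assume x: "x \<in> lcarrier M" and y: "y \<in> lcarrier M"
  have fx: "f x \<in> lcarrier N" and fy: "f y \<in> lcarrier N" and gx: "g x \<in> lcarrier N" and gy: "g y \<in> lcarrier N"
    using x y f g by (auto intro: lhom_closed)
  show "ladd N (f (ladd M x y)) (g (ladd M x y)) = ladd N (ladd N (f x) (g x)) (ladd N (f y) (g y))"
    using f g x y fx fy gx gy N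
    by (simp add: lhom_add ladd_assoc ladd_closed ladd_left_comm[of N "g x" "f y"])
next
  fix a x assume x: "x \<in> lcarrier M"
  show "ladd N (f (lsmult M a x)) (g (lsmult M a x)) = lsmult N a (ladd N (f x) (g x))"
    using f g x N by (simp add: lhom_smult lsmult_add_r lhom_closed)
qed

lemma lhom_neg:
  assumes N: "lmodule N" and f: "f \<in> lhom M N"
  shows "(\<lambda>x. lsmult N (-1) (f x)) \<in> lhom M N"
  unfolding lhom_def using N f
  by (auto simp: lhom_closed lsmult_closed lhom_add lhom_smult lsmult_add_r simp flip: lsmult_assoc)

lemma lhom_lsub:
  assumes N: "lmodule N" and f: "f \<in> lhom M N" and g: "g \<in> lhom M N"
  shows "(\<lambda>x. lsub N (f x) (g x)) \<in> lhom M N"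
  unfolding lsub_def by (rule lhom_ladd[OF N f lhom_neg[OF N g]])



lemma kernel_submodule:
  assumes M: "lmodule M" and N: "lmodule N" and f: "f \<in> lhom M N"
  shows "submodule {x \<in> lcarrier M. f x = lzero N} M"
  unfolding submodule_def using M N f
  by (auto simp: lzero_closed ladd_closed lsmult_closed lhom_zero lhom_add lhom_smult lzero_l lsmult_zero_r)

lemma lkernel_lmodule:
  "lmodule M \<Longrightarrow> lmodule N \<Longrightarrow> f \<in> lhom M N \<Longrightarrow> lmodule (lkernel M N f)"
  unfolding lkernel_def by (rule submodule_lmodule, assumption, rule kernel_submodule)

lemma lkernel_simps[simp]:
  "lcarrier (lkernel M N f) = {x \<in> lcarrier M. f x = lzero N}"
  "ladd (lkernel M N f) = ladd M" "lzero (lkernel M N f) = lzero M" "lsmult (lkernel M N f) = lsmult M"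
  "lsub (lkernel M N f) = lsub M"
  unfolding lkernel_def lsub_def by (auto intro!: ext)

lemma sub_simps[simp]:
  "lsub (M\<lparr>lcarrier := C\<rparr>) = lsub M"
  unfolding lsub_def by (auto intro!: ext)

lemma image_submodule:
  assumes M: "lmodule M" and N: "lmodule N" and f: "f \<in> lhom M N"
  shows "submodule (f ` lcarrier M) N"
  unfolding submodule_def
proof (intro conjI ballI allI)
  show "f ` lcarrier M \<subseteq> lcarrier N" using f by (auto intro: lhom_closed)
  show "lzero N \<in> f ` lcarrier M" using M N f by (metis image_eqI lhom_zero lzero_closed)
  fix y1 y2 assume "y1 \<in> f ` lcarrier M" "y2 \<in> f ` lcarrier M"
  then obtain x1 x2 where "x1 \<in> lcarrier M" "x2 \<in> lcarrier M" "y1 = f x1" "y2 = f x2" by blast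
  thus "ladd N y1 y2 \<in> f ` lcarrier M" using M f by (metis image_eqI lhom_add ladd_closed)
next
  fix a y assume "y \<in> f ` lcarrier M"
  then obtain x where "x \<in> lcarrier M" "y = f x" by blast
  thus "lsmult N a y \<in> f ` lcarrier M" using M f by (metis image_eqI lhom_smult lsmult_closed)
qed

lemma regmod_lmodule: "lmodule (regmod :: ('a::ring_1, 'a) lmod)"
  unfolding lmodule_def regmod_def by (auto simp: algebra_simps intro: exI[of _ "- _"])

lemma regmod_simps[simp]: "lcarrier regmod = UNIV" "ladd regmod = (+)" "lzero regmod = 0" "lsmult regmod = (*)"
  unfolding regmod_def by auto

lemma lhom_regmod_iff: "f \<in> lhom M regmod \<longleftrightarrow>
   (\<forall>x\<in>lcarrier M. \<forall>y\<in>lcarrier M. f (ladd M x y) = f x + f y) \<and> (\<forall>a. \<forall>x\<in>lcarrier M. f (lsmult M a x) = a * f x)"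
  unfolding lhom_def by simp

lemma submoduleD:
  assumes "submodule T M"
  shows "T \<subseteq> lcarrier M" "lzero M \<in> T" "\<And>x y. x \<in> T \<Longrightarrow> y \<in> T \<Longrightarrow> ladd M x y \<in> T"
    "\<And>a x. x \<in> T \<Longrightarrow> lsmult M a x \<in> T"
  using assms unfolding submodule_def by blast+

lemma preimage_submodule:
  assumes M: "lmodule M" and N: "lmodule N" and f: "f \<in> lhom M N" and T: "submodule T N"
  shows "submodule {x \<in> lcarrier M. f x \<in> T} M"
  unfolding submodule_def
proof (intro conjI ballI allI)
  show "{x \<in> lcarrier M. f x \<in> T} \<subseteq> lcarrier M" by blast
  show "lzero M \<in> {x \<in> lcarrier M. f x \<in> T}" using M N f T by (simp add: lzero_closed lhom_zero submoduleD)
  fix x y assume x: "x \<in> {x \<in> lcarrier M. f x \<in> T}" and y: "y \<in> {x \<in> lcarrier M. f x \<in> T}"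
  show "ladd M x y \<in> {x \<in> lcarrier M. f x \<in> T}"
    using x y M f T by (simp add: ladd_closed lhom_add submoduleD)
next
  fix a x assume x: "x \<in> {x \<in> lcarrier M. f x \<in> T}"
  show "lsmult M a x \<in> {x \<in> lcarrier M. f x \<in> T}"
    using x M f T by (simp add: lsmult_closed lhom_smult submoduleD)
qed

lemma fin_gen_image:
  assumes M: "lmodule M" and N: "lmodule N" and f: "f \<in> lhom M N" and onto: "f ` lcarrier M = lcarrier N"
    and fg: "fin_gen M"
  shows "fin_gen N"
proof -
  from fg obtain S where S1: "finite S" and S2: "S \<subseteq> lcarrier M"
    and S3: "\<forall>T. submodule T M \<and> S \<subseteq> T \<longrightarrow> T = lcarrier M"
    unfolding fin_gen_def by blast
  have "\<forall>T. submodule T N \<and> f ` S \<subseteq> T \<longrightarrow> T = lcarrier N"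
  proof (intro allI impI)
    fix T assume T: "submodule T N \<and> f ` S \<subseteq> T"
    have T1: "submodule T N" and T2: "f ` S \<subseteq> T" using T by blast+
    have "submodule {x \<in> lcarrier M. f x \<in> T} M"
      by (rule preimage_submodule[OF M N f T1])
    moreover have "S \<subseteq> {x \<in> lcarrier M. f x \<in> T}" using S2 T2 by blast
    ultimately have E: "{x \<in> lcarrier M. f x \<in> T} = lcarrier M" using S3 by blast
    have "lcarrier N \<subseteq> T"
    proof
      fix y assume "y \<in> lcarrier N"
      hence "y \<in> f ` lcarrier M" by (simp only: onto)
      then obtain x where x: "x \<in> lcarrier M" "y = f x" by blast
      from x(1) have "x \<in> {x \<in> lcarrier M. f x \<in> T}" by (simp only: E)
      thus "y \<in> T" using x(2) by blast
    qed
    thus "T = lcarrier N" using submoduleD(1)[OF T1] by blast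
  qed
  moreover have "f ` S \<subseteq> lcarrier N" using S2 onto by blast
  ultimately show ?thesis unfolding fin_gen_def using S1 by blast
qed

lemma fg_projectiveD:
  assumes "fg_projective P"
  shows "lmodule P" "fin_gen P"
    "\<And>(X :: ('a::ring_1, nat \<Rightarrow> 'a) lmod) (Y :: ('a, nat \<Rightarrow> 'a) lmod) g f.
        lmodule X \<Longrightarrow> lmodule Y \<Longrightarrow> g \<in> lhom X Y \<Longrightarrow> g ` lcarrier X = lcarrier Y \<Longrightarrow> f \<in> lhom P Y
        \<Longrightarrow> (\<exists>h\<in>lhom P X. \<forall>x\<in>lcarrier P. g (h x) = f x)"
  using assms unfolding fg_projective_def by blast+

lemma retract_projective:
  assumes P: "fg_projective P" and C: "submodule C P" and r: "r \<in> lhom P (P\<lparr>lcarrier := C\<rparr>)"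
    and rid: "\<forall>x\<in>C. r x = x"
  shows "fg_projective (P\<lparr>lcarrier := C\<rparr>)"
proof -
  have PM: "lmodule P" using fg_projectiveD[OF P] by blast
  have CM: "lmodule (P\<lparr>lcarrier := C\<rparr>)" by (rule submodule_lmodule[OF PM C])
  have Csub: "C \<subseteq> lcarrier P" using submoduleD(1)[OF C] .
  have onto: "r ` lcarrier P = lcarrier (P\<lparr>lcarrier := C\<rparr>)"
  proof
    show "r ` lcarrier P \<subseteq> lcarrier (P\<lparr>lcarrier := C\<rparr>)" using lhom_closed[OF r] by blast
    show "lcarrier (P\<lparr>lcarrier := C\<rparr>) \<subseteq> r ` lcarrier P"
    proof
      fix x assume "x \<in> lcarrier (P\<lparr>lcarrier := C\<rparr>)"
      hence x: "x \<in> C" by simp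
      hence "r x = x" using rid by blast
      thus "x \<in> r ` lcarrier P" using x Csub by (metis image_eqI subsetD)
    qed
  qed
  have fg: "fin_gen (P\<lparr>lcarrier := C\<rparr>)"
    by (rule fin_gen_image[OF PM CM r onto fg_projectiveD(2)[OF P]])
  show ?thesis unfolding fg_projective_def
  proof (intro conjI CM fg allI impI)
    fix X Y :: "('a, nat \<Rightarrow> 'a) lmod" and g f
    assume H: "lmodule X \<and> lmodule Y \<and> g \<in> lhom X Y \<and> g ` lcarrier X = lcarrier Y \<and> f \<in> lhom (P\<lparr>lcarrier := C\<rparr>) Y"
    have X: "lmodule X" and Y: "lmodule Y" and g: "g \<in> lhom X Y" and go: "g ` lcarrier X = lcarrier Y"
      and f: "f \<in> lhom (P\<lparr>lcarrier := C\<rparr>) Y" using H by blast+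
    have fr: "(\<lambda>x. f (r x)) \<in> lhom P Y" by (rule lhom_comp[OF r f])
    obtain h where h: "h \<in> lhom P X" and hh: "\<forall>x\<in>lcarrier P. g (h x) = f (r x)"
      using fg_projectiveD(3)[OF P X Y g go fr] by blast
    have "h \<in> lhom (P\<lparr>lcarrier := C\<rparr>) X" using lhom_restrict[OF Csub h] .
    moreover have "\<forall>x\<in>lcarrier (P\<lparr>lcarrier := C\<rparr>). g (h x) = f x"
      using hh rid Csub by auto
    ultimately show "\<exists>h\<in>lhom (P\<lparr>lcarrier := C\<rparr>) X. \<forall>x\<in>lcarrier (P\<lparr>lcarrier := C\<rparr>). g (h x) = f x"
      by blast
  qed
qed

section \<open>Direct sums\<close>

definition enc :: "(nat \<Rightarrow> 'a) \<Rightarrow> (nat \<Rightarrow> 'a) \<Rightarrow> nat \<Rightarrow> 'a" where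
  "enc x y = (\<lambda>j. if even j then x (j div 2) else y (j div 2))"
definition dfst :: "(nat \<Rightarrow> 'a) \<Rightarrow> nat \<Rightarrow> 'a" where "dfst z = (\<lambda>j. z (2 * j))"
definition dsnd :: "(nat \<Rightarrow> 'a) \<Rightarrow> nat \<Rightarrow> 'a" where "dsnd z = (\<lambda>j. z (2 * j + 1))"

lemma dfst_enc[simp]: "dfst (enc x y) = x" and dsnd_enc[simp]: "dsnd (enc x y) = y"
  unfolding enc_def dfst_def dsnd_def by auto

lemma enc_dfst_dsnd[simp]: "enc (dfst z) (dsnd z) = z"
proof
  fix j :: nat
  show "enc (dfst z) (dsnd z) j = z j"
  proof (cases "even j")
    case True thus ?thesis unfolding enc_def dfst_def by simp
  next
    case False
    hence "2 * (j div 2) + 1 = j" by presburger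
    thus ?thesis using False unfolding enc_def dsnd_def by simp
  qed
qed

lemma enc_inj[simp]: "enc x y = enc x' y' \<longleftrightarrow> x = x' \<and> y = y'"
  by (metis dfst_enc dsnd_enc)

definition dsum :: "('a::ring_1, nat \<Rightarrow> 'a) lmod \<Rightarrow> ('a, nat \<Rightarrow> 'a) lmod \<Rightarrow> ('a, nat \<Rightarrow> 'a) lmod" where
  "dsum P Q = \<lparr>lcarrier = {z. dfst z \<in> lcarrier P \<and> dsnd z \<in> lcarrier Q},
     ladd = (\<lambda>z w. enc (ladd P (dfst z) (dfst w)) (ladd Q (dsnd z) (dsnd w))),
     lzero = enc (lzero P) (lzero Q),
     lsmult = (\<lambda>a z. enc (lsmult P a (dfst z)) (lsmult Q a (dsnd z)))\<rparr>"

lemma dsum_carrier: "z \<in> lcarrier (dsum P Q) \<longleftrightarrow> dfst z \<in> lcarrier P \<and> dsnd z \<in> lcarrier Q"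
  unfolding dsum_def by simp

lemma lcarrier_dsum: "lcarrier (dsum P Q) = {z. dfst z \<in> lcarrier P \<and> dsnd z \<in> lcarrier Q}"
  unfolding dsum_def by simp

lemma dsum_simps[simp]:
  "ladd (dsum P Q) z w = enc (ladd P (dfst z) (dfst w)) (ladd Q (dsnd z) (dsnd w))"
  "lzero (dsum P Q) = enc (lzero P) (lzero Q)"
  "lsmult (dsum P Q) a z = enc (lsmult P a (dfst z)) (lsmult Q a (dsnd z))"
  unfolding dsum_def by auto

lemma dsum_lsub: "lsub (dsum P Q) z w = enc (lsub P (dfst z) (dfst w)) (lsub Q (dsnd z) (dsnd w))"
  unfolding lsub_def by simp

lemma dsum_lmodule:
  assumes P: "lmodule P" and Q: "lmodule Q"
  shows "lmodule (dsum P Q)"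
  unfolding lmodule_def lcarrier_dsum
proof (intro conjI ballI allI)
  fix x assume x: "x \<in> {z. dfst z \<in> lcarrier P \<and> dsnd z \<in> lcarrier Q}"
  show "\<exists>y\<in>{z. dfst z \<in> lcarrier P \<and> dsnd z \<in> lcarrier Q}. ladd (dsum P Q) x y = lzero (dsum P Q)"
    by (rule bexI[of _ "enc (lsmult P (-1) (dfst x)) (lsmult Q (-1) (dsnd x))"])
       (use x P Q in \<open>auto simp: lneg_r lsmult_closed\<close>)
next
  fix x y assume "x \<in> {z. dfst z \<in> lcarrier P \<and> dsnd z \<in> lcarrier Q}" "y \<in> {z. dfst z \<in> lcarrier P \<and> dsnd z \<in> lcarrier Q}"
  thus "ladd (dsum P Q) x y = ladd (dsum P Q) y x" using P Q by (simp, metis ladd_comm)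
qed (use P Q in \<open>auto simp: lzero_closed ladd_closed lsmult_closed ladd_assoc lzero_l lsmult_add_r lsmult_add_l lsmult_assoc lsmult_one\<close>)

lemma dfst_hom: "dfst \<in> lhom (dsum P Q) P"
  and dsnd_hom: "dsnd \<in> lhom (dsum P Q) Q"
  unfolding lhom_def by (auto simp: dsum_carrier)

lemma inl_hom: "lmodule Q \<Longrightarrow> (\<lambda>x. enc x (lzero Q)) \<in> lhom P (dsum P Q)"
  and inr_hom: "lmodule P \<Longrightarrow> (\<lambda>y. enc (lzero P) y) \<in> lhom Q (dsum P Q)"
  unfolding lhom_def by (auto simp: dsum_carrier lzero_closed lzero_l lsmult_zero_r)

lemma enc_hom:
  assumes "f \<in> lhom M P" "g \<in> lhom M Q"
  shows "(\<lambda>x. enc (f x) (g x)) \<in> lhom M (dsum P Q)"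
  using assms unfolding lhom_def by (auto simp: dsum_carrier)

lemma enc_split: "lmodule P \<Longrightarrow> lmodule Q \<Longrightarrow> x \<in> lcarrier P \<Longrightarrow> y \<in> lcarrier Q \<Longrightarrow>
  enc x y = ladd (dsum P Q) (enc x (lzero Q)) (enc (lzero P) y)"
  by (simp add: lzero_l lzero_r)

lemma dsum_fin_gen:
  assumes P: "lmodule P" and Q: "lmodule Q" and fP: "fin_gen P" and fQ: "fin_gen Q"
  shows "fin_gen (dsum P Q)"
proof -
  from fP obtain S1 where S11: "finite S1" and S12: "S1 \<subseteq> lcarrier P"
    and S13: "\<forall>T. submodule T P \<and> S1 \<subseteq> T \<longrightarrow> T = lcarrier P"
    unfolding fin_gen_def by blast
  from fQ obtain S2 where S21: "finite S2" and S22: "S2 \<subseteq> lcarrier Q"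
    and S23: "\<forall>T. submodule T Q \<and> S2 \<subseteq> T \<longrightarrow> T = lcarrier Q"
    unfolding fin_gen_def by blast
  define il where "il = (\<lambda>x. enc x (lzero Q))"
  define ir where "ir = (\<lambda>y. enc (lzero P) y)"
  have DM: "lmodule (dsum P Q)" using P Q by (rule dsum_lmodule)
  have ilh: "il \<in> lhom P (dsum P Q)" unfolding il_def by (rule inl_hom[OF Q])
  have irh: "ir \<in> lhom Q (dsum P Q)" unfolding ir_def by (rule inr_hom[OF P])
  have "\<forall>T. submodule T (dsum P Q) \<and> il ` S1 \<union> ir ` S2 \<subseteq> T \<longrightarrow> T = lcarrier (dsum P Q)"
  proof (intro allI impI)
    fix T assume T: "submodule T (dsum P Q) \<and> il ` S1 \<union> ir ` S2 \<subseteq> T"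
    have T1: "submodule T (dsum P Q)" and T2: "il ` S1 \<subseteq> T" and T3: "ir ` S2 \<subseteq> T" using T by blast+
    have "submodule {x \<in> lcarrier P. il x \<in> T} P" by (rule preimage_submodule[OF P DM ilh T1])
    moreover have "S1 \<subseteq> {x \<in> lcarrier P. il x \<in> T}" using S12 T2 by blast
    ultimately have E1: "{x \<in> lcarrier P. il x \<in> T} = lcarrier P" using S13 by blast
    have "submodule {x \<in> lcarrier Q. ir x \<in> T} Q" by (rule preimage_submodule[OF Q DM irh T1])
    moreover have "S2 \<subseteq> {x \<in> lcarrier Q. ir x \<in> T}" using S22 T3 by blast
    ultimately have E2: "{x \<in> lcarrier Q. ir x \<in> T} = lcarrier Q" using S23 by blast
    show "T = lcarrier (dsum P Q)"
    proof
      show "T \<subseteq> lcarrier (dsum P Q)" using submoduleD(1)[OF T1] .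
      show "lcarrier (dsum P Q) \<subseteq> T"
      proof
        fix z assume z: "z \<in> lcarrier (dsum P Q)"
        hence z1: "dfst z \<in> lcarrier P" and z2: "dsnd z \<in> lcarrier Q" by (auto simp: dsum_carrier)
        have a: "il (dfst z) \<in> T" using z1 E1 by blast
        have b: "ir (dsnd z) \<in> T" using z2 E2 by blast
        have "z = ladd (dsum P Q) (il (dfst z)) (ir (dsnd z))"
          using enc_split[OF P Q z1 z2] unfolding il_def ir_def by simp
        thus "z \<in> T" using submoduleD(3)[OF T1 a b] by simp
      qed
    qed
  qed
  moreover have "il ` S1 \<union> ir ` S2 \<subseteq> lcarrier (dsum P Q)"
    using S12 S22 lhom_closed[OF ilh] lhom_closed[OF irh] by blast
  moreover have "finite (il ` S1 \<union> ir ` S2)" using S11 S21 by blast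
  ultimately show ?thesis unfolding fin_gen_def by blast
qed

lemma dsum_projective:
  assumes P: "fg_projective P" and Q: "fg_projective Q"
  shows "fg_projective (dsum P Q)"
proof -
  have PM: "lmodule P" and QM: "lmodule Q" using P Q fg_projectiveD by blast+
  show ?thesis unfolding fg_projective_def
  proof (intro conjI allI impI)
    show "lmodule (dsum P Q)" using PM QM by (rule dsum_lmodule)
    show "fin_gen (dsum P Q)" using PM QM fg_projectiveD(2)[OF P] fg_projectiveD(2)[OF Q] by (rule dsum_fin_gen)
    fix X Y :: "('a, nat \<Rightarrow> 'a) lmod" and g f
    assume H: "lmodule X \<and> lmodule Y \<and> g \<in> lhom X Y \<and> g ` lcarrier X = lcarrier Y \<and> f \<in> lhom (dsum P Q) Y"
    have X: "lmodule X" and Y: "lmodule Y" and g: "g \<in> lhom X Y" and go: "g ` lcarrier X = lcarrier Y"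
      and f: "f \<in> lhom (dsum P Q) Y" using H by blast+
    have f1: "(\<lambda>x. f (enc x (lzero Q))) \<in> lhom P Y" by (rule lhom_comp[OF inl_hom[OF QM] f])
    have f2: "(\<lambda>y. f (enc (lzero P) y)) \<in> lhom Q Y" by (rule lhom_comp[OF inr_hom[OF PM] f])
    obtain h1 where h1: "h1 \<in> lhom P X" and h1e: "\<forall>x\<in>lcarrier P. g (h1 x) = f (enc x (lzero Q))"
      using fg_projectiveD(3)[OF P X Y g go f1] by blast
    obtain h2 where h2: "h2 \<in> lhom Q X" and h2e: "\<forall>y\<in>lcarrier Q. g (h2 y) = f (enc (lzero P) y)"
      using fg_projectiveD(3)[OF Q X Y g go f2] by blast
    let ?h = "\<lambda>z. ladd X (h1 (dfst z)) (h2 (dsnd z))"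
    have hh: "?h \<in> lhom (dsum P Q) X"
      by (rule lhom_ladd[OF X lhom_comp[OF dfst_hom h1] lhom_comp[OF dsnd_hom h2]])
    show "\<exists>h\<in>lhom (dsum P Q) X. \<forall>x\<in>lcarrier (dsum P Q). g (h x) = f x"
    proof (intro bexI[OF _ hh] ballI)
      fix z assume z: "z \<in> lcarrier (dsum P Q)"
      hence z1: "dfst z \<in> lcarrier P" and z2: "dsnd z \<in> lcarrier Q" by (auto simp: dsum_carrier)
      have i1: "enc (dfst z) (lzero Q) \<in> lcarrier (dsum P Q)" using z1 QM by (simp add: dsum_carrier lzero_closed)
      have i2: "enc (lzero P) (dsnd z) \<in> lcarrier (dsum P Q)" using z2 PM by (simp add: dsum_carrier lzero_closed)
      have "g (?h z) = ladd Y (g (h1 (dfst z))) (g (h2 (dsnd z)))"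
        using lhom_add[OF g lhom_closed[OF h1 z1] lhom_closed[OF h2 z2]] .
      also have "\<dots> = ladd Y (f (enc (dfst z) (lzero Q))) (f (enc (lzero P) (dsnd z)))" using h1e h2e z1 z2 by simp
      also have "\<dots> = f (ladd (dsum P Q) (enc (dfst z) (lzero Q)) (enc (lzero P) (dsnd z)))"
        using lhom_add[OF f i1 i2] by simp
      also have "\<dots> = f z" using enc_split[OF PM QM z1 z2] by simp
      finally show "g (?h z) = f z" .
    qed
  qed
qed



lemma lift_gen:
  fixes P X :: "('a::ring_1, nat \<Rightarrow> 'a) lmod" and Y :: "('a, 'y) lmod"
  assumes P: "fg_projective P" and X: "lmodule X" and Y: "lmodule Y" and g: "g \<in> lhom X Y"
    and go: "g ` lcarrier X = lcarrier Y" and f: "f \<in> lhom P Y"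
  shows "\<exists>h\<in>lhom P X. \<forall>x\<in>lcarrier P. g (h x) = f x"
proof -
  have PM: "lmodule P" using fg_projectiveD(1)[OF P] .
  define D where "D = dsum P X"
  have DM: "lmodule D" unfolding D_def by (rule dsum_lmodule[OF PM X])
  define Ec where "Ec = {z \<in> lcarrier D. f (dfst z) = g (dsnd z)}"
  have Esub: "submodule Ec D"
    unfolding submodule_def
  proof (intro conjI ballI allI)
    show "Ec \<subseteq> lcarrier D" unfolding Ec_def by blast
    show "lzero D \<in> Ec" unfolding Ec_def D_def
      using PM X Y f g by (simp add: lzero_closed lhom_zero dsum_carrier)
    fix z w assume z: "z \<in> Ec" and w: "w \<in> Ec"
    have z1: "dfst z \<in> lcarrier P" "dsnd z \<in> lcarrier X" and w1: "dfst w \<in> lcarrier P" "dsnd w \<in> lcarrier X"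
      using z w unfolding Ec_def D_def dsum_carrier by auto
    show "ladd D z w \<in> Ec"
      using z w z1 w1 PM X unfolding Ec_def D_def
      by (simp add: dsum_carrier ladd_closed lhom_add[OF f] lhom_add[OF g])
  next
    fix a z assume z: "z \<in> Ec"
    have z1: "dfst z \<in> lcarrier P" "dsnd z \<in> lcarrier X"
      using z unfolding Ec_def D_def dsum_carrier by auto
    show "lsmult D a z \<in> Ec"
      using z z1 PM X unfolding Ec_def D_def
      by (simp add: dsum_carrier lsmult_closed lhom_smult[OF f] lhom_smult[OF g])
  qed
  define E where "E = D\<lparr>lcarrier := Ec\<rparr>"
  have EM: "lmodule E" unfolding E_def by (rule submodule_lmodule[OF DM Esub])
  have Ecs: "Ec \<subseteq> lcarrier D" using submoduleD(1)[OF Esub] .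
  have p1: "dfst \<in> lhom E P" unfolding E_def D_def
    using lhom_restrict[OF Ecs[unfolded D_def] dfst_hom] .
  have p2: "dsnd \<in> lhom E X" unfolding E_def D_def
    using lhom_restrict[OF Ecs[unfolded D_def] dsnd_hom] .
  have onto: "dfst ` lcarrier E = lcarrier P"
  proof
    show "dfst ` lcarrier E \<subseteq> lcarrier P" using lhom_closed[OF p1] by blast
    show "lcarrier P \<subseteq> dfst ` lcarrier E"
    proof
      fix x assume x: "x \<in> lcarrier P"
      hence "f x \<in> g ` lcarrier X" using go lhom_closed[OF f] by blast
      then obtain y where y: "y \<in> lcarrier X" "f x = g y" by blast
      have "enc x y \<in> lcarrier E" unfolding E_def Ec_def D_def using x y by (simp add: dsum_carrier)
      thus "x \<in> dfst ` lcarrier E" by (metis dfst_enc image_eqI)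
    qed
  qed
  obtain h0 where h0: "h0 \<in> lhom P E" and h0e: "\<forall>x\<in>lcarrier P. dfst (h0 x) = x"
    using fg_projectiveD(3)[OF P EM PM p1 onto lhom_id] by blast
  show ?thesis
  proof (intro bexI[of _ "\<lambda>x. dsnd (h0 x)"] ballI)
    show "(\<lambda>x. dsnd (h0 x)) \<in> lhom P X" by (rule lhom_comp[OF h0 p2])
    fix x assume x: "x \<in> lcarrier P"
    have "h0 x \<in> Ec" using lhom_closed[OF h0 x] unfolding E_def by simp
    hence "f (dfst (h0 x)) = g (dsnd (h0 x))" unfolding Ec_def by blast
    thus "g (dsnd (h0 x)) = f x" using h0e x by simp
  qed
qed

section \<open>Factoring through an epimorphism\<close>

lemma factor_epi:
  assumes P: "lmodule P" and W: "lmodule W" and N: "lmodule N" and p: "p \<in> lhom P W"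
    and po: "p ` lcarrier P = lcarrier W" and f: "f \<in> lhom P N"
    and van: "\<forall>x\<in>lcarrier P. p x = lzero W \<longrightarrow> f x = lzero N"
  shows "\<exists>f'\<in>lhom W N. \<forall>x\<in>lcarrier P. f x = f' (p x)"
proof -
  define pre where "pre = (\<lambda>w. SOME x. x \<in> lcarrier P \<and> p x = w)"
  have pre: "\<And>w. w \<in> lcarrier W \<Longrightarrow> pre w \<in> lcarrier P \<and> p (pre w) = w"
  proof -
    fix w assume "w \<in> lcarrier W"
    hence "w \<in> p ` lcarrier P" using po by simp
    hence "\<exists>x. x \<in> lcarrier P \<and> p x = w" by blast
    thus "pre w \<in> lcarrier P \<and> p (pre w) = w" unfolding pre_def by (rule someI_ex)
  qed
  have wd: "\<And>x y. x \<in> lcarrier P \<Longrightarrow> y \<in> lcarrier P \<Longrightarrow> p x = p y \<Longrightarrow> f x = f y"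
  proof -
    fix x y assume x: "x \<in> lcarrier P" and y: "y \<in> lcarrier P" and e: "p x = p y"
    have "p (lsub P x y) = lzero W" using lhom_sub[OF p x y P] e lsub_self[OF W lhom_closed[OF p y]] by simp
    hence "f (lsub P x y) = lzero N" using van lsub_closed[OF P x y] by blast
    hence "lsub N (f x) (f y) = lzero N" using lhom_sub[OF f x y P] by simp
    thus "f x = f y" using lsub_eq_zero[OF N lhom_closed[OF f x] lhom_closed[OF f y]] by blast
  qed
  define f' where "f' = (\<lambda>w. f (pre w))"
  have key: "\<And>x. x \<in> lcarrier P \<Longrightarrow> f' (p x) = f x"
  proof -
    fix x assume x: "x \<in> lcarrier P"
    have "pre (p x) \<in> lcarrier P \<and> p (pre (p x)) = p x" using pre[OF lhom_closed[OF p x]] .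
    thus "f' (p x) = f x" unfolding f'_def using wd[of "pre (p x)" x] x by blast
  qed
  have "f' \<in> lhom W N"
    unfolding lhom_def
  proof (intro CollectI conjI ballI allI)
    fix w assume w: "w \<in> lcarrier W"
    have "pre w \<in> lcarrier P" using pre[OF w] by (rule conjunct1)
    thus "f' w \<in> lcarrier N" unfolding f'_def by (rule lhom_closed[OF f])
  next
    fix w1 w2 assume w1: "w1 \<in> lcarrier W" and w2: "w2 \<in> lcarrier W"
    define x1 where "x1 = pre w1"
    define x2 where "x2 = pre w2"
    have x1: "x1 \<in> lcarrier P" "p x1 = w1" using pre[OF w1] unfolding x1_def by auto
    have x2: "x2 \<in> lcarrier P" "p x2 = w2" using pre[OF w2] unfolding x2_def by auto
    have "ladd W w1 w2 = p (ladd P x1 x2)" using lhom_add[OF p x1(1) x2(1)] x1(2) x2(2) by simp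
    hence "f' (ladd W w1 w2) = f (ladd P x1 x2)" using key[OF ladd_closed[OF P x1(1) x2(1)]] by simp
    also have "\<dots> = ladd N (f x1) (f x2)" using lhom_add[OF f x1(1) x2(1)] .
    also have "\<dots> = ladd N (f' w1) (f' w2)" using key[OF x1(1)] key[OF x2(1)] x1(2) x2(2) by simp
    finally show "f' (ladd W w1 w2) = ladd N (f' w1) (f' w2)" .
  next
    fix a w assume w: "w \<in> lcarrier W"
    define x where "x = pre w"
    have x: "x \<in> lcarrier P" "p x = w" using pre[OF w] unfolding x_def by auto
    have "lsmult W a w = p (lsmult P a x)" using lhom_smult[OF p x(1)] x(2) by simp
    hence "f' (lsmult W a w) = f (lsmult P a x)" using key[OF lsmult_closed[OF P x(1)]] by simp
    also have "\<dots> = lsmult N a (f x)" using lhom_smult[OF f x(1)] .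
    also have "\<dots> = lsmult N a (f' w)" using key[OF x(1)] x(2) by simp
    finally show "f' (lsmult W a w) = lsmult N a (f' w)" .
  qed
  thus ?thesis using key by (intro bexI[of _ f']) auto
qed

section \<open>Free modules\<close>

definition freemod :: "nat \<Rightarrow> ('a::ring_1, nat \<Rightarrow> 'a) lmod" where
  "freemod m = \<lparr>lcarrier = {a. \<forall>j\<ge>m. a j = 0}, ladd = (\<lambda>a b j. a j + b j), lzero = (\<lambda>j. 0),
     lsmult = (\<lambda>c a j. c * a j)\<rparr>"

lemma freemod_simps[simp]:
  "lcarrier (freemod m) = {a. \<forall>j\<ge>m. a j = 0}" "ladd (freemod m) = (\<lambda>a b j. a j + b j)"
  "lzero (freemod m) = (\<lambda>j. 0)" "lsmult (freemod m) = (\<lambda>c a j. c * a j)"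
  unfolding freemod_def by auto

lemma freemod_lmodule: "lmodule (freemod m :: ('a::ring_1, nat \<Rightarrow> 'a) lmod)"
  unfolding lmodule_def freemod_simps
  by (auto simp: algebra_simps intro!: ext) (rule_tac x="\<lambda>j. - x j" in exI, auto)

primrec lcomb :: "('a::ring_1, 'm) lmod \<Rightarrow> 'm list \<Rightarrow> (nat \<Rightarrow> 'a) \<Rightarrow> 'm" where
  "lcomb Q [] a = lzero Q"
| "lcomb Q (s # ss) a = ladd Q (lsmult Q (a 0) s) (lcomb Q ss (\<lambda>j. a (Suc j)))"

lemma lcomb_closed: "lmodule Q \<Longrightarrow> set ss \<subseteq> lcarrier Q \<Longrightarrow> lcomb Q ss a \<in> lcarrier Q"
  by (induction ss arbitrary: a) (auto simp: lzero_closed ladd_closed lsmult_closed)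

lemma ladd_4: "lmodule Q \<Longrightarrow> x \<in> lcarrier Q \<Longrightarrow> y \<in> lcarrier Q \<Longrightarrow> u \<in> lcarrier Q \<Longrightarrow> v \<in> lcarrier Q \<Longrightarrow>
  ladd Q (ladd Q x y) (ladd Q u v) = ladd Q (ladd Q x u) (ladd Q y v)"
  by (simp add: ladd_assoc ladd_closed ladd_left_comm[of Q y u v])

lemma lcomb_add: "lmodule Q \<Longrightarrow> set ss \<subseteq> lcarrier Q \<Longrightarrow>
   lcomb Q ss (\<lambda>j. a j + b j) = ladd Q (lcomb Q ss a) (lcomb Q ss b)"
proof (induction ss arbitrary: a b)
  case Nil thus ?case by (simp add: lzero_l lzero_closed)
next
  case (Cons s ss)
  have s: "s \<in> lcarrier Q" and ss: "set ss \<subseteq> lcarrier Q" using Cons.prems by auto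
  show ?case using Cons.prems(1) s ss
    by (simp add: Cons.IH lsmult_add_l ladd_4 lsmult_closed lcomb_closed)
qed

lemma lcomb_smult: "lmodule Q \<Longrightarrow> set ss \<subseteq> lcarrier Q \<Longrightarrow>
   lcomb Q ss (\<lambda>j. c * a j) = lsmult Q c (lcomb Q ss a)"
proof (induction ss arbitrary: a)
  case Nil thus ?case by (simp add: lsmult_zero_r)
next
  case (Cons s ss)
  have s: "s \<in> lcarrier Q" and ss: "set ss \<subseteq> lcarrier Q" using Cons.prems by auto
  show ?case using Cons.prems(1) s ss
    by (simp add: Cons.IH lsmult_add_r lsmult_assoc lsmult_closed lcomb_closed)
qed

lemma lcomb_zero: "lmodule Q \<Longrightarrow> set ss \<subseteq> lcarrier Q \<Longrightarrow> lcomb Q ss (\<lambda>j. 0) = lzero Q"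
  by (induction ss) (auto simp: lsmult_zero_l lzero_l lzero_closed)

lemma lcomb_delta: "lmodule Q \<Longrightarrow> set ss \<subseteq> lcarrier Q \<Longrightarrow> k < length ss \<Longrightarrow>
   lcomb Q ss (\<lambda>j. if j = k then 1 else 0) = ss ! k"
proof (induction ss arbitrary: k)
  case Nil thus ?case by simp
next
  case (Cons s ss)
  have s: "s \<in> lcarrier Q" and ss: "set ss \<subseteq> lcarrier Q" using Cons.prems by auto
  show ?case
  proof (cases k)
    case 0 thus ?thesis using Cons.prems(1) s ss by (simp add: lsmult_one lcomb_zero lzero_r)
  next
    case (Suc k')
    have "(\<lambda>j. if Suc j = k then 1 else 0) = (\<lambda>j. if j = k' then (1::'a) else 0)" using Suc by auto
    thus ?thesis using Cons.prems Suc s ss Cons.IH[of k']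
      by (simp add: lsmult_zero_l lzero_l lcomb_closed nth_mem subsetD)
  qed
qed

lemma lcomb_hom: "lmodule Q \<Longrightarrow> set ss \<subseteq> lcarrier Q \<Longrightarrow> (\<lambda>a. lcomb Q ss a) \<in> lhom (freemod m) Q"
  unfolding lhom_def by (simp add: lcomb_closed lcomb_add lcomb_smult)

lemma fg_free_cover:
  fixes Q :: "('a::ring_1, nat \<Rightarrow> 'a) lmod"
  assumes Q: "lmodule Q" and fg: "fin_gen Q"
  shows "\<exists>m \<pi>. \<pi> \<in> lhom (freemod m) Q \<and> \<pi> ` lcarrier (freemod m) = lcarrier Q"
proof -
  from fg obtain S where S1: "finite S" and S2: "S \<subseteq> lcarrier Q"
    and S3: "\<forall>T. submodule T Q \<and> S \<subseteq> T \<longrightarrow> T = lcarrier Q"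
    unfolding fin_gen_def by blast
  obtain ss where ss: "set ss = S" using finite_list[OF S1] by blast
  define m where "m = length ss"
  define \<pi> where "\<pi> = (\<lambda>a. lcomb Q ss a)"
  have h: "\<pi> \<in> lhom (freemod m) Q" unfolding \<pi>_def using lcomb_hom[OF Q] ss S2 by blast
  have sub: "submodule (\<pi> ` lcarrier (freemod m)) Q" by (rule image_submodule[OF freemod_lmodule Q h])
  have "S \<subseteq> \<pi> ` lcarrier (freemod m)"
  proof
    fix s assume "s \<in> S"
    then obtain k where k: "k < length ss" "ss ! k = s" using ss by (metis in_set_conv_nth)
    have "\<pi> (\<lambda>j. if j = k then 1 else 0) = s" unfolding \<pi>_def using lcomb_delta[OF Q _ k(1)] ss S2 k(2) by blast
    moreover have "(\<lambda>j. if j = k then 1 else 0) \<in> lcarrier (freemod m)" using k(1) unfolding m_def by simp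
    ultimately show "s \<in> \<pi> ` lcarrier (freemod m)" by (metis image_eqI)
  qed
  hence "\<pi> ` lcarrier (freemod m) = lcarrier Q" using S3 sub by blast
  thus ?thesis using h by blast
qed

lemma ext_to_proj:
  fixes X :: "('a::ring_1, 'p) lmod" and P :: "('a, 'p) lmod" and Q :: "('a, nat \<Rightarrow> 'a) lmod"
  assumes X: "lmodule X" and P: "lmodule P" and Q: "fg_projective Q"
    and ext: "\<forall>\<phi>\<in>lhom X regmod. \<exists>\<psi>\<in>lhom P regmod. \<forall>x\<in>lcarrier X. \<psi> x = \<phi> x"
    and \<phi>: "\<phi> \<in> lhom X Q"
  shows "\<exists>\<psi>\<in>lhom P Q. \<forall>x\<in>lcarrier X. \<psi> x = \<phi> x"
proof -
  have QM: "lmodule Q" using fg_projectiveD(1)[OF Q] .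
  obtain m \<pi> where \<pi>: "\<pi> \<in> lhom (freemod m) Q" and \<pi>o: "\<pi> ` lcarrier (freemod m) = lcarrier Q"
    using fg_free_cover[OF QM fg_projectiveD(2)[OF Q]] by blast
  obtain \<sigma> where \<sigma>: "\<sigma> \<in> lhom Q (freemod m)" and \<sigma>e: "\<forall>q\<in>lcarrier Q. \<pi> (\<sigma> q) = q"
    using fg_projectiveD(3)[OF Q freemod_lmodule QM \<pi> \<pi>o lhom_id] by blast
  have coord: "\<And>j. (\<lambda>x. \<sigma> (\<phi> x) j) \<in> lhom X regmod"
  proof -
    fix j
    have "(\<lambda>a. a j) \<in> lhom (freemod m) (regmod :: ('a, 'a) lmod)" unfolding lhom_def by simp
    thus "(\<lambda>x. \<sigma> (\<phi> x) j) \<in> lhom X regmod" using lhom_comp[OF lhom_comp[OF \<phi> \<sigma>]] by blast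
  qed
  have "\<forall>j. \<exists>\<psi>. \<psi> \<in> lhom P regmod \<and> (\<forall>x\<in>lcarrier X. \<psi> x = \<sigma> (\<phi> x) j)"
  proof
    fix j show "\<exists>\<psi>. \<psi> \<in> lhom P regmod \<and> (\<forall>x\<in>lcarrier X. \<psi> x = \<sigma> (\<phi> x) j)"
      using ext coord[of j] by fastforce
  qed
  then obtain \<psi> where \<psi>: "\<And>j. \<psi> j \<in> lhom P regmod" and \<psi>e: "\<And>j x. x \<in> lcarrier X \<Longrightarrow> \<psi> j x = \<sigma> (\<phi> x) j"
    by metis
  define \<Psi> where "\<Psi> = (\<lambda>y j. if j < m then \<psi> j y else 0)"
  have \<Psi>h: "\<Psi> \<in> lhom P (freemod m)"
    unfolding lhom_def \<Psi>_def using \<psi> by (auto simp: lhom_regmod_iff intro!: ext)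
  have \<Psi>e: "\<And>x. x \<in> lcarrier X \<Longrightarrow> \<Psi> x = \<sigma> (\<phi> x)"
  proof -
    fix x assume x: "x \<in> lcarrier X"
    have "\<sigma> (\<phi> x) \<in> lcarrier (freemod m)" using lhom_closed[OF \<sigma> lhom_closed[OF \<phi> x]] .
    thus "\<Psi> x = \<sigma> (\<phi> x)" unfolding \<Psi>_def using \<psi>e[OF x] by (auto intro!: ext)
  qed
  show ?thesis
  proof (intro bexI[of _ "\<lambda>y. \<pi> (\<Psi> y)"] ballI)
    show "(\<lambda>y. \<pi> (\<Psi> y)) \<in> lhom P Q" by (rule lhom_comp[OF \<Psi>h \<pi>])
    fix x assume x: "x \<in> lcarrier X"
    show "\<pi> (\<Psi> x) = \<phi> x" using \<Psi>e[OF x] \<sigma>e lhom_closed[OF \<phi> x] by simp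
  qed
qed



definition Cc :: "('a::ring_1, 'm) lmod \<Rightarrow> (nat \<Rightarrow> ('a, nat \<Rightarrow> 'a) lmod) \<Rightarrow> ((nat \<Rightarrow> 'a) \<Rightarrow> 'm)
   \<Rightarrow> (nat \<Rightarrow> (nat \<Rightarrow> 'a) \<Rightarrow> (nat \<Rightarrow> 'a)) \<Rightarrow> nat \<Rightarrow> ('a, nat \<Rightarrow> 'a) lmod" where
  "Cc M Pc p1 pc k = (if k = 1 then lkernel (Pc 1) M p1 else lkernel (Pc k) (Pc (k - 1)) (pc k))"

lemma lkernel_cong: "lzero N = lzero N' \<Longrightarrow> lkernel M N f = lkernel M N' f"
  unfolding lkernel_def by simp

lemma Cc_simps[simp]:
  "ladd (Cc M Pc p1 pc k) = ladd (Pc k)" "lzero (Cc M Pc p1 pc k) = lzero (Pc k)"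
  "lsmult (Cc M Pc p1 pc k) = lsmult (Pc k)" "lsub (Cc M Pc p1 pc k) = lsub (Pc k)"
  unfolding Cc_def by auto

lemma Cc_carrier1: "lcarrier (Cc M Pc p1 pc (Suc 0)) = {x \<in> lcarrier (Pc 1). p1 x = lzero M}"
  unfolding Cc_def by simp

lemma Cc_carrier2: "k \<noteq> 1 \<Longrightarrow> lcarrier (Cc M Pc p1 pc k) = {x \<in> lcarrier (Pc k). pc k x = lzero (Pc (k - 1))}"
  unfolding Cc_def by simp

lemma Cc_alt: "k \<ge> 2 \<Longrightarrow> Cc M Pc p1 pc k = lkernel (Pc k) (Cc M Pc p1 pc (k - 1)) (pc k)"
  unfolding Cc_def by (auto intro: lkernel_cong)

lemma Cc_sub: "lcarrier (Cc M Pc p1 pc k) \<subseteq> lcarrier (Pc k)"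
  unfolding Cc_def by auto

lemma lhom_into_Cc: "f \<in> lhom X (Pc k) \<Longrightarrow> \<forall>x\<in>lcarrier X. f x \<in> lcarrier (Cc M Pc p1 pc k) \<Longrightarrow>
  f \<in> lhom X (Cc M Pc p1 pc k)"
  unfolding lhom_def Cc_simps by blast

lemma lhom_from_Cc: "f \<in> lhom X (Cc M Pc p1 pc k) \<Longrightarrow> f \<in> lhom X (Pc k)"
  unfolding lhom_def Cc_simps using Cc_sub by blast

lemma lhom_Cc_closed: "f \<in> lhom X (Cc M Pc p1 pc k) \<Longrightarrow> x \<in> lcarrier X \<Longrightarrow> f x \<in> lcarrier (Cc M Pc p1 pc k)"
  by (rule lhom_closed)

lemma lhom_restrict_Cc: "f \<in> lhom (Pc k) Y \<Longrightarrow> f \<in> lhom (Cc M Pc p1 pc k) Y"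
  unfolding lhom_def Cc_simps using Cc_sub by blast

locale chain =
  fixes M :: "('a::ring_1, 'm) lmod" and N :: nat and Pc :: "nat \<Rightarrow> ('a, nat \<Rightarrow> 'a) lmod"
    and p1 :: "(nat \<Rightarrow> 'a) \<Rightarrow> 'm" and pc :: "nat \<Rightarrow> (nat \<Rightarrow> 'a) \<Rightarrow> (nat \<Rightarrow> 'a)"
  assumes M: "lmodule M" and N1: "N \<ge> 1"
    and proj: "\<And>k. 1 \<le> k \<Longrightarrow> k \<le> N \<Longrightarrow> fg_projective (Pc k)"
    and p1h: "p1 \<in> lhom (Pc 1) M" and p1o: "p1 ` lcarrier (Pc 1) = lcarrier M"
    and pch: "\<And>k. 2 \<le> k \<Longrightarrow> k \<le> N \<Longrightarrow> pc k \<in> lhom (Pc k) (Cc M Pc p1 pc (k - 1))"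
    and pco: "\<And>k. 2 \<le> k \<Longrightarrow> k \<le> N \<Longrightarrow> pc k ` lcarrier (Pc k) = lcarrier (Cc M Pc p1 pc (k - 1))"
begin

abbreviation "C \<equiv> Cc M Pc p1 pc"

lemma PM: "1 \<le> k \<Longrightarrow> k \<le> N \<Longrightarrow> lmodule (Pc k)"
  using proj fg_projectiveD(1) by blast

lemma CM: "1 \<le> k \<Longrightarrow> k \<le> N \<Longrightarrow> lmodule (C k)"
proof (induction k rule: nat_induct_at_least)
  case base
  show ?case using lkernel_lmodule[OF PM M p1h] base unfolding Cc_def by simp
next
  case (Suc k)
  have k1: "1 \<le> Suc k" "Suc k \<le> N" "2 \<le> Suc k" using Suc by auto
  have IH: "lmodule (C k)" using Suc by simp
  have "pc (Suc k) \<in> lhom (Pc (Suc k)) (C k)" using pch[OF k1(3,2)] by simp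
  hence "lmodule (lkernel (Pc (Suc k)) (C k) (pc (Suc k)))"
    using lkernel_lmodule[OF PM[OF k1(1,2)] IH] by blast
  thus ?case using Cc_alt[of "Suc k" M Pc p1 pc] Suc by simp
qed

end

lemma res_exact:
  assumes R: "proj_resolution M R d e" and k: "k \<ge> 1"
  shows "{x \<in> lcarrier (R k). d (k - 1) x = lzero (R (k - 1))} = d k ` lcarrier (R (Suc k))"
proof -
  have "\<forall>j. {x \<in> lcarrier (R (Suc j)). d j x = lzero (R j)} = d (Suc j) ` lcarrier (R (Suc (Suc j)))"
    using R unfolding proj_resolution_def by (elim conjE) assumption
  from this[rule_format, of "k - 1"] show ?thesis using k by simp
qed

lemma res_props:
  assumes R: "proj_resolution M R d e"
  shows "\<And>k. fg_projective (R k)" "e \<in> lhom (R 0) M" "e ` lcarrier (R 0) = lcarrier M"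
    "\<And>k. d k \<in> lhom (R (Suc k)) (R k)" "{x \<in> lcarrier (R 0). e x = lzero M} = d 0 ` lcarrier (R 1)"
  using R unfolding proj_resolution_def by auto

lemma res_dk: "proj_resolution M R d e \<Longrightarrow> k \<ge> 1 \<Longrightarrow> d (k - 1) \<in> lhom (R k) (R (k - 1))"
  using res_props(4)[of M R d e "k - 1"] by simp

context chain begin

definition Jprop where
  "Jprop R d k \<longleftrightarrow> (\<exists>\<alpha> \<beta> t. \<alpha> \<in> lhom (Pc k) (R (k - 1)) \<and> \<beta> \<in> lhom (R (k - 1)) (Pc k) \<and>
      (\<forall>x\<in>lcarrier (C k). \<alpha> x \<in> d (k - 1) ` lcarrier (R k)) \<and>
      (\<forall>r\<in>d (k - 1) ` lcarrier (R k). \<beta> r \<in> lcarrier (C k)) \<and>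
      t \<in> lhom (Pc k) (C k) \<and> (\<forall>x\<in>lcarrier (C k). t x = lsub (Pc k) x (\<beta> (\<alpha> x))))"

lemma J_base:
  assumes R: "proj_resolution M R d e"
  shows "Jprop R d 1"
proof -
  have P1: "fg_projective (Pc 1)" using proj N1 by simp
  have P1M: "lmodule (Pc 1)" using PM N1 by simp
  have R0: "fg_projective (R 0)" using res_props(1)[OF R] .
  have R0M: "lmodule (R 0)" using fg_projectiveD(1)[OF R0] .
  have eh: "e \<in> lhom (R 0) M" using res_props(2)[OF R] .
  have eo: "e ` lcarrier (R 0) = lcarrier M" using res_props(3)[OF R] .
  have ker: "{x \<in> lcarrier (R 0). e x = lzero M} = d 0 ` lcarrier (R 1)" using res_props(5)[OF R] .
  obtain \<alpha> where \<alpha>: "\<alpha> \<in> lhom (Pc 1) (R 0)" and \<alpha>e: "\<forall>x\<in>lcarrier (Pc 1). e (\<alpha> x) = p1 x"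
    using lift_gen[OF P1 R0M M eh eo p1h] by blast
  obtain \<beta> where \<beta>: "\<beta> \<in> lhom (R 0) (Pc 1)" and \<beta>e: "\<forall>r\<in>lcarrier (R 0). p1 (\<beta> r) = e r"
    using lift_gen[OF R0 P1M M p1h p1o eh] by blast
  define t where "t = (\<lambda>x. lsub (Pc 1) x (\<beta> (\<alpha> x)))"
  have th: "t \<in> lhom (Pc 1) (Pc 1)" unfolding t_def
    by (rule lhom_lsub[OF P1M lhom_id lhom_comp[OF \<alpha> \<beta>]])
  have tC: "\<forall>x\<in>lcarrier (Pc 1). t x \<in> lcarrier (C 1)"
  proof
    fix x assume x: "x \<in> lcarrier (Pc 1)"
    have ax: "\<alpha> x \<in> lcarrier (R 0)" using lhom_closed[OF \<alpha> x] .
    have bx: "\<beta> (\<alpha> x) \<in> lcarrier (Pc 1)" using lhom_closed[OF \<beta> ax] .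
    have "p1 (t x) = lsub M (p1 x) (p1 (\<beta> (\<alpha> x)))" unfolding t_def using lhom_sub[OF p1h x bx P1M] .
    also have "\<dots> = lsub M (p1 x) (p1 x)" using \<beta>e ax \<alpha>e x by simp
    also have "\<dots> = lzero M" using lsub_self[OF M lhom_closed[OF p1h x]] .
    finally show "t x \<in> lcarrier (C 1)" using lhom_closed[OF th x] by (simp add: Cc_carrier1)
  qed
  have thC: "t \<in> lhom (Pc 1) (C 1)" using lhom_into_Cc[OF th tC] .
  show ?thesis unfolding Jprop_def
  proof (intro exI conjI)
    show "\<alpha> \<in> lhom (Pc 1) (R (1 - 1))" using \<alpha> by simp
    show "\<beta> \<in> lhom (R (1 - 1)) (Pc 1)" using \<beta> by simp
    show "t \<in> lhom (Pc 1) (C 1)" by (rule thC)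
    show "\<forall>x\<in>lcarrier (C 1). t x = lsub (Pc 1) x (\<beta> (\<alpha> x))" unfolding t_def by blast
    show "\<forall>x\<in>lcarrier (C 1). \<alpha> x \<in> d (1 - 1) ` lcarrier (R 1)"
    proof
      fix x assume "x \<in> lcarrier (C 1)"
      hence x: "x \<in> lcarrier (Pc 1)" "p1 x = lzero M" by (auto simp: Cc_carrier1)
      have "\<alpha> x \<in> {x \<in> lcarrier (R 0). e x = lzero M}" using lhom_closed[OF \<alpha> x(1)] \<alpha>e x by simp
      thus "\<alpha> x \<in> d (1 - 1) ` lcarrier (R 1)" using ker by simp
    qed
    show "\<forall>r\<in>d (1 - 1) ` lcarrier (R 1). \<beta> r \<in> lcarrier (C 1)"
    proof
      fix r assume "r \<in> d (1 - 1) ` lcarrier (R 1)"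
      hence "r \<in> {x \<in> lcarrier (R 0). e x = lzero M}" using ker by simp
      hence r: "r \<in> lcarrier (R 0)" "e r = lzero M" by auto
      show "\<beta> r \<in> lcarrier (C 1)" using lhom_closed[OF \<beta> r(1)] \<beta>e r by (simp add: Cc_carrier1)
    qed
  qed
qed

end



context chain begin

lemma J_step:
  assumes R: "proj_resolution M R d e" and k1: "k \<ge> 1" and kN: "Suc k \<le> N" and J: "Jprop R d k"
  shows "Jprop R d (Suc k)"
proof -
  have PkM: "lmodule (Pc k)" using PM k1 kN by simp
  have Pk: "fg_projective (Pc k)" using proj k1 kN by simp
  have Pk1: "fg_projective (Pc (Suc k))" using proj kN by simp
  have Pk1M: "lmodule (Pc (Suc k))" using PM kN by simp
  have CkM: "lmodule (C k)" using CM k1 kN by simp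
  define p where "p = pc (Suc k)"
  have ph: "p \<in> lhom (Pc (Suc k)) (C k)" unfolding p_def using pch[of "Suc k"] k1 kN by simp
  have po: "p ` lcarrier (Pc (Suc k)) = lcarrier (C k)" unfolding p_def using pco[of "Suc k"] k1 kN by simp
  have Rk: "fg_projective (R k)" using res_props(1)[OF R] .
  have RkM: "lmodule (R k)" using fg_projectiveD(1)[OF Rk] .
  have Rk1M: "lmodule (R (k - 1))" using fg_projectiveD(1)[OF res_props(1)[OF R]] .
  have dk1: "d (k - 1) \<in> lhom (R k) (R (k - 1))" using res_dk[OF R k1] .
  define Kc where "Kc = d (k - 1) ` lcarrier (R k)"
  define K where "K = (R (k - 1))\<lparr>lcarrier := Kc\<rparr>"
  have Ksub: "submodule Kc (R (k - 1))" unfolding Kc_def by (rule image_submodule[OF RkM Rk1M dk1])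
  have Kcs: "Kc \<subseteq> lcarrier (R (k - 1))" using submoduleD(1)[OF Ksub] .
  have KM: "lmodule K" unfolding K_def by (rule submodule_lmodule[OF Rk1M Ksub])
  have dK: "d (k - 1) \<in> lhom (R k) K" unfolding K_def
    using lhom_sub_target[OF Kcs] dk1 unfolding Kc_def by blast
  have dKo: "d (k - 1) ` lcarrier (R k) = lcarrier K" unfolding K_def Kc_def by simp
  have ex_rk: "{x \<in> lcarrier (R k). d (k - 1) x = lzero (R (k - 1))} = d k ` lcarrier (R (Suc k))"
    using res_exact[OF R k1] .
  from J obtain \<alpha> \<beta> t where \<alpha>: "\<alpha> \<in> lhom (Pc k) (R (k - 1))" and \<beta>: "\<beta> \<in> lhom (R (k - 1)) (Pc k)"
    and \<alpha>m: "\<forall>x\<in>lcarrier (C k). \<alpha> x \<in> Kc" and \<beta>m: "\<forall>r\<in>Kc. \<beta> r \<in> lcarrier (C k)"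
    and t: "t \<in> lhom (Pc k) (C k)" and te: "\<forall>x\<in>lcarrier (C k). t x = lsub (Pc k) x (\<beta> (\<alpha> x))"
    unfolding Jprop_def Kc_def by blast
  have \<alpha>C: "\<alpha> \<in> lhom (C k) K" unfolding K_def
    using lhom_sub_target[OF Kcs] lhom_restrict_Cc[of \<alpha> Pc k "R (k - 1)" M p1 pc, OF \<alpha>] \<alpha>m by blast
  have \<beta>K: "\<beta> \<in> lhom K (C k)"
  proof -
    have "\<beta> \<in> lhom K (Pc k)" unfolding K_def by (rule lhom_restrict[OF Kcs \<beta>])
    moreover have "\<forall>x\<in>lcarrier K. \<beta> x \<in> lcarrier (C k)" unfolding K_def using \<beta>m by simp
    ultimately show ?thesis by (rule lhom_into_Cc)
  qed
  obtain s where s: "s \<in> lhom (Pc k) (Pc (Suc k))" and se: "\<forall>x\<in>lcarrier (Pc k). p (s x) = t x"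
    using lift_gen[OF Pk Pk1M CkM ph po t] by blast
  obtain \<alpha>' where \<alpha>': "\<alpha>' \<in> lhom (Pc (Suc k)) (R k)" and \<alpha>'e: "\<forall>y\<in>lcarrier (Pc (Suc k)). d (k - 1) (\<alpha>' y) = \<alpha> (p y)"
    using lift_gen[OF Pk1 RkM KM dK dKo lhom_comp[OF ph \<alpha>C]] by blast
  obtain \<beta>' where \<beta>': "\<beta>' \<in> lhom (R k) (Pc (Suc k))" and \<beta>'e: "\<forall>r\<in>lcarrier (R k). p (\<beta>' r) = \<beta> (d (k - 1) r)"
    using lift_gen[OF Rk Pk1M CkM ph po lhom_comp[OF dK \<beta>K]] by blast
  define t' where "t' = (\<lambda>y. lsub (Pc (Suc k)) (lsub (Pc (Suc k)) y (\<beta>' (\<alpha>' y))) (s (p y)))"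
  have Sk: "Suc k \<noteq> 1" using k1 by simp
  have CSk: "\<And>y. y \<in> lcarrier (C (Suc k)) \<longleftrightarrow> y \<in> lcarrier (Pc (Suc k)) \<and> p y = lzero (Pc k)"
    unfolding p_def using Cc_carrier2[OF Sk, of M Pc p1 pc] by simp
  have t'h0: "t' \<in> lhom (Pc (Suc k)) (Pc (Suc k))" unfolding t'_def
    by (rule lhom_lsub[OF Pk1M lhom_lsub[OF Pk1M lhom_id lhom_comp[OF \<alpha>' \<beta>']]
          lhom_comp[OF lhom_from_Cc[OF ph] s]])
  have pCk: "\<And>x. x \<in> lcarrier (C k) \<Longrightarrow> x \<in> lcarrier (Pc k)" using Cc_sub by blast
  have t'm: "\<forall>y\<in>lcarrier (Pc (Suc k)). t' y \<in> lcarrier (C (Suc k))"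
  proof
    fix y assume y: "y \<in> lcarrier (Pc (Suc k))"
    have py: "p y \<in> lcarrier (C k)" using lhom_closed[OF ph y] .
    have py': "p y \<in> lcarrier (Pc k)" using pCk[OF py] .
    have a1: "\<alpha>' y \<in> lcarrier (R k)" using lhom_closed[OF \<alpha>' y] .
    have b1: "\<beta>' (\<alpha>' y) \<in> lcarrier (Pc (Suc k))" using lhom_closed[OF \<beta>' a1] .
    have sp: "s (p y) \<in> lcarrier (Pc (Suc k))" using lhom_closed[OF s py'] .
    have yb: "lsub (Pc (Suc k)) y (\<beta>' (\<alpha>' y)) \<in> lcarrier (Pc (Suc k))" using lsub_closed[OF Pk1M y b1] .
    have pb1: "p (\<beta>' (\<alpha>' y)) = \<beta> (\<alpha> (p y))" using \<beta>'e a1 \<alpha>'e y by simp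
    have bap: "\<beta> (\<alpha> (p y)) \<in> lcarrier (Pc k)"
      using lhom_closed[OF \<beta> lhom_closed[OF \<alpha> py']] .
    have "p (t' y) = lsub (Pc k) (p (lsub (Pc (Suc k)) y (\<beta>' (\<alpha>' y)))) (p (s (p y)))"
      unfolding t'_def using lhom_sub[OF ph yb sp Pk1M] by simp
    also have "\<dots> = lsub (Pc k) (lsub (Pc k) (p y) (\<beta> (\<alpha> (p y)))) (t (p y))"
      using lhom_sub[OF ph y b1 Pk1M] pb1 se py' by simp
    also have "\<dots> = lzero (Pc k)" using te py lsub_self[OF PkM lsub_closed[OF PkM py' bap]] by simp
    finally show "t' y \<in> lcarrier (C (Suc k))" using CSk lhom_closed[OF t'h0 y] by blast
  qed
  have t'h: "t' \<in> lhom (Pc (Suc k)) (C (Suc k))" by (rule lhom_into_Cc[OF t'h0 t'm])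
  have t'e: "\<forall>y\<in>lcarrier (C (Suc k)). t' y = lsub (Pc (Suc k)) y (\<beta>' (\<alpha>' y))"
  proof
    fix y assume "y \<in> lcarrier (C (Suc k))"
    hence y: "y \<in> lcarrier (Pc (Suc k))" "p y = lzero (Pc k)" using CSk by blast+
    have "s (p y) = lzero (Pc (Suc k))" using y(2) lhom_zero[OF PkM Pk1M s] by simp
    thus "t' y = lsub (Pc (Suc k)) y (\<beta>' (\<alpha>' y))" unfolding t'_def
      using lsub_zero[OF Pk1M lsub_closed[OF Pk1M y(1) lhom_closed[OF \<beta>' lhom_closed[OF \<alpha>' y(1)]]]] by simp
  qed
  have \<alpha>'m: "\<forall>y\<in>lcarrier (C (Suc k)). \<alpha>' y \<in> d k ` lcarrier (R (Suc k))"
  proof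
    fix y assume "y \<in> lcarrier (C (Suc k))"
    hence y: "y \<in> lcarrier (Pc (Suc k))" "p y = lzero (Pc k)" using CSk by blast+
    have "d (k - 1) (\<alpha>' y) = lzero (R (k - 1))" using \<alpha>'e y lhom_zero[OF PkM Rk1M \<alpha>] by simp
    hence "\<alpha>' y \<in> {x \<in> lcarrier (R k). d (k - 1) x = lzero (R (k - 1))}" using lhom_closed[OF \<alpha>' y(1)] by simp
    thus "\<alpha>' y \<in> d k ` lcarrier (R (Suc k))" by (simp only: ex_rk)
  qed
  have \<beta>'m: "\<forall>r\<in>d k ` lcarrier (R (Suc k)). \<beta>' r \<in> lcarrier (C (Suc k))"
  proof
    fix r assume "r \<in> d k ` lcarrier (R (Suc k))"
    hence "r \<in> {x \<in> lcarrier (R k). d (k - 1) x = lzero (R (k - 1))}" using ex_rk by simp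
    hence r: "r \<in> lcarrier (R k)" "d (k - 1) r = lzero (R (k - 1))" by auto
    have "p (\<beta>' r) = lzero (Pc k)" using \<beta>'e r lhom_zero[OF Rk1M PkM \<beta>] by simp
    thus "\<beta>' r \<in> lcarrier (C (Suc k))" using CSk lhom_closed[OF \<beta>' r(1)] by blast
  qed
  show ?thesis unfolding Jprop_def
    using \<alpha>' \<beta>' \<alpha>'m \<beta>'m t'h t'e by (intro exI[of _ \<alpha>'] exI[of _ \<beta>'] exI[of _ t']) simp
qed

lemma transfer:
  assumes ev: "ext_vanishes M N"
  shows "\<forall>\<phi>\<in>lhom (C N) regmod. \<exists>\<psi>\<in>lhom (Pc N) regmod. \<forall>x\<in>lcarrier (C N). \<psi> x = \<phi> x"
proof
  fix \<phi> assume \<phi>: "\<phi> \<in> lhom (C N) regmod"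
  obtain R d e where R: "proj_resolution M R d e" and
    hc: "\<forall>f\<in>lhom (R N) (regmod :: ('a, 'a) lmod).
           (\<forall>x\<in>lcarrier (R (Suc N)). f (d N x) = 0) \<longrightarrow>
           (\<exists>g\<in>lhom (R (N - 1)) (regmod :: ('a, 'a) lmod). \<forall>x\<in>lcarrier (R N). f x = g (d (N - 1) x))"
    using ev unfolding ext_vanishes_def by blast
  have Jall: "\<And>k. 1 \<le> k \<Longrightarrow> k \<le> N \<Longrightarrow> Jprop R d k"
  proof -
    fix k :: nat assume "1 \<le> k" "k \<le> N"
    thus "Jprop R d k"
    proof (induction k rule: nat_induct_at_least)
      case base thus ?case using J_base[OF R] by simp
    next
      case (Suc k)
      have "Jprop R d k" using Suc by simp
      thus ?case using J_step[OF R Suc.hyps(1) Suc.prems] by simp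
    qed
  qed
  have J: "Jprop R d N" using Jall N1 by simp
  from J obtain \<alpha> \<beta> t where \<alpha>: "\<alpha> \<in> lhom (Pc N) (R (N - 1))" and \<beta>: "\<beta> \<in> lhom (R (N - 1)) (Pc N)"
    and \<alpha>m: "\<forall>x\<in>lcarrier (C N). \<alpha> x \<in> d (N - 1) ` lcarrier (R N)"
    and \<beta>m: "\<forall>r\<in>d (N - 1) ` lcarrier (R N). \<beta> r \<in> lcarrier (C N)"
    and t: "t \<in> lhom (Pc N) (C N)" and te: "\<forall>x\<in>lcarrier (C N). t x = lsub (Pc N) x (\<beta> (\<alpha> x))"
    unfolding Jprop_def by blast
  have PNM: "lmodule (Pc N)" using PM N1 by simp
  have CNM: "lmodule (C N)" using CM N1 by simp
  have RNM: "lmodule (R N)" using fg_projectiveD(1)[OF res_props(1)[OF R]] .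
  have RN1M: "lmodule (R (N - 1))" using fg_projectiveD(1)[OF res_props(1)[OF R]] .
  have dN1: "d (N - 1) \<in> lhom (R N) (R (N - 1))" using res_dk[OF R N1] .
  have ex_N: "{x \<in> lcarrier (R N). d (N - 1) x = lzero (R (N - 1))} = d N ` lcarrier (R (Suc N))"
    using res_exact[OF R N1] .
  define f where "f = (\<lambda>r. \<phi> (\<beta> (d (N - 1) r)))"
  have fh: "f \<in> lhom (R N) regmod"
    unfolding lhom_def f_def
  proof (intro CollectI conjI ballI allI)
    fix x assume "x \<in> lcarrier (R N)" thus "\<phi> (\<beta> (d (N - 1) x)) \<in> lcarrier regmod" by simp
  next
    fix x y assume x: "x \<in> lcarrier (R N)" and y: "y \<in> lcarrier (R N)"
    have bx: "\<beta> (d (N - 1) x) \<in> lcarrier (C N)" using \<beta>m x by blast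
    have by': "\<beta> (d (N - 1) y) \<in> lcarrier (C N)" using \<beta>m y by blast
    have "\<beta> (d (N - 1) (ladd (R N) x y)) = ladd (C N) (\<beta> (d (N - 1) x)) (\<beta> (d (N - 1) y))"
      using lhom_add[OF dN1 x y] lhom_add[OF \<beta> lhom_closed[OF dN1 x] lhom_closed[OF dN1 y]] by simp
    thus "\<phi> (\<beta> (d (N - 1) (ladd (R N) x y))) = ladd regmod (\<phi> (\<beta> (d (N - 1) x))) (\<phi> (\<beta> (d (N - 1) y)))"
      using lhom_add[OF \<phi> bx by'] by simp
  next
    fix a x assume x: "x \<in> lcarrier (R N)"
    have bx: "\<beta> (d (N - 1) x) \<in> lcarrier (C N)" using \<beta>m x by blast
    have "\<beta> (d (N - 1) (lsmult (R N) a x)) = lsmult (C N) a (\<beta> (d (N - 1) x))"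
      using lhom_smult[OF dN1 x] lhom_smult[OF \<beta> lhom_closed[OF dN1 x]] by simp
    thus "\<phi> (\<beta> (d (N - 1) (lsmult (R N) a x))) = lsmult regmod a (\<phi> (\<beta> (d (N - 1) x)))"
      using lhom_smult[OF \<phi> bx] by simp
  qed
  have fz: "\<forall>x\<in>lcarrier (R (Suc N)). f (d N x) = 0"
  proof
    fix x assume x: "x \<in> lcarrier (R (Suc N))"
    have "d N x \<in> {x \<in> lcarrier (R N). d (N - 1) x = lzero (R (N - 1))}" using ex_N x by simp
    hence "d (N - 1) (d N x) = lzero (R (N - 1))" by simp
    moreover have "\<beta> (lzero (R (N - 1))) = lzero (C N)" using lhom_zero[OF RN1M PNM \<beta>] by simp
    moreover have "\<phi> (lzero (C N)) = 0" using lhom_zero[OF CNM regmod_lmodule \<phi>] by simp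
    ultimately show "f (d N x) = 0" unfolding f_def by simp
  qed
  obtain g where g: "g \<in> lhom (R (N - 1)) regmod" and ge: "\<forall>x\<in>lcarrier (R N). f x = g (d (N - 1) x)"
    using hc fh fz by blast
  define \<psi> where "\<psi> = (\<lambda>y. ladd regmod (g (\<alpha> y)) (\<phi> (t y)))"
  have \<psi>h: "\<psi> \<in> lhom (Pc N) regmod" unfolding \<psi>_def
    by (rule lhom_ladd[OF regmod_lmodule lhom_comp[OF \<alpha> g] lhom_comp[OF t \<phi>]])
  show "\<exists>\<psi>\<in>lhom (Pc N) regmod. \<forall>x\<in>lcarrier (C N). \<psi> x = \<phi> x"
  proof (intro bexI[OF _ \<psi>h] ballI)
    fix x assume x: "x \<in> lcarrier (C N)"
    obtain r where r: "r \<in> lcarrier (R N)" "\<alpha> x = d (N - 1) r" using \<alpha>m x by blast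
    have "g (\<alpha> x) = \<phi> (\<beta> (\<alpha> x))" using ge r unfolding f_def by simp
    moreover have ba: "\<beta> (\<alpha> x) \<in> lcarrier (C N)" using \<beta>m r by simp
    moreover have "\<phi> (t x) = \<phi> x - \<phi> (\<beta> (\<alpha> x))"
      using te x lhom_sub[OF \<phi> x ba CNM] by (simp add: lsub_def)
    ultimately show "\<psi> x = \<phi> x" unfolding \<psi>_def by simp
  qed
qed

end



lemma lneg_closed: "lmodule M \<Longrightarrow> x \<in> lcarrier M \<Longrightarrow> lsmult M (-1) x \<in> lcarrier M"
  by (rule lsmult_closed)

lemma lsub_swap: "lmodule M \<Longrightarrow> x \<in> lcarrier M \<Longrightarrow> y \<in> lcarrier M \<Longrightarrow>
  lsub M x y = lsmult M (-1) (lsub M y x)"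
  unfolding lsub_def
  by (simp add: lsmult_add_r lsmult_closed lsmult_m1_m1 ladd_comm)

lemma lsub_neg: "lmodule M \<Longrightarrow> x \<in> lcarrier M \<Longrightarrow> y \<in> lcarrier M \<Longrightarrow>
  lsub M x (lsmult M (-1) y) = ladd M x y"
  unfolding lsub_def by (simp add: lsmult_m1_m1)

lemma lsub_lsub_cancel: "lmodule M \<Longrightarrow> a \<in> lcarrier M \<Longrightarrow> b \<in> lcarrier M \<Longrightarrow> c \<in> lcarrier M \<Longrightarrow>
  lsub M (lsub M a b) (lsub M c b) = lsub M a c"
proof -
  assume M: "lmodule M" and a: "a \<in> lcarrier M" and b: "b \<in> lcarrier M" and c: "c \<in> lcarrier M"
  have nb: "lsmult M (-1) b \<in> lcarrier M" and nc: "lsmult M (-1) c \<in> lcarrier M" using M b c by (auto intro: lsmult_closed)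
  have "lsub M (lsub M a b) (lsub M c b) = ladd M (ladd M a (lsmult M (-1) b)) (ladd M (lsmult M (-1) c) b)"
    unfolding lsub_def using M b c by (simp add: lsmult_add_r lsmult_closed lsmult_m1_m1)
  also have "\<dots> = ladd M (ladd M a (lsmult M (-1) c)) (ladd M (lsmult M (-1) b) b)"
    using ladd_4[OF M a nb nc b] ladd_comm[OF M nb nc] ladd_4[OF M a nc nb b] by simp
  also have "\<dots> = lsub M a c" unfolding lsub_def using M a b nc by (simp add: lneg_l lzero_r ladd_closed)
  finally show ?thesis .
qed

lemma lhom_into_sub: "f \<in> lhom X N \<Longrightarrow> (\<forall>x\<in>lcarrier X. f x \<in> C) \<Longrightarrow> C \<subseteq> lcarrier N \<Longrightarrow> f \<in> lhom X (N\<lparr>lcarrier := C\<rparr>)"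
  unfolding lhom_def by auto

lemma lhom_from_sub: "f \<in> lhom X (N\<lparr>lcarrier := C\<rparr>) \<Longrightarrow> C \<subseteq> lcarrier N \<Longrightarrow> f \<in> lhom X N"
  unfolding lhom_def by auto

lemma lhom_kernel_target: "f \<in> lhom X (lkernel P W p) \<Longrightarrow> f \<in> lhom X P"
  unfolding lhom_def by auto

lemma lhom_kernel_restrict: "f \<in> lhom P Y \<Longrightarrow> f \<in> lhom (lkernel P W p) Y"
  unfolding lhom_def by auto



lemma modify:
  fixes P :: "('a::ring_1, nat \<Rightarrow> 'a) lmod" and W :: "('a, 'w) lmod" and M :: "('a, 'm) lmod"
  assumes P: "fg_projective P" and W: "lmodule W" and M: "lmodule M"
    and ph: "p \<in> lhom P W" and po: "p ` lcarrier P = lcarrier W"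
    and ext: "\<forall>\<phi>\<in>lhom (lkernel P W p) regmod. \<exists>\<psi>\<in>lhom P regmod. \<forall>x\<in>lcarrier (lkernel P W p). \<psi> x = \<phi> x"
    and si: "stably_iso (lkernel P W p) M"
  shows "\<exists>P'' q \<sigma>. fg_projective P'' \<and> q \<in> lhom P'' W \<and> q ` lcarrier P'' = lcarrier W \<and>
     \<sigma> \<in> lhom M P'' \<and> inj_on \<sigma> (lcarrier M) \<and> \<sigma> ` lcarrier M = {z \<in> lcarrier P''. q z = lzero W}"
proof -
  define X where "X = lkernel P W p"
  have PM: "lmodule P" using fg_projectiveD(1)[OF P] .
  have XM: "lmodule X" unfolding X_def by (rule lkernel_lmodule[OF PM W ph])
  define Xc where "Xc = lcarrier X"
  have Xc: "Xc = {x \<in> lcarrier P. p x = lzero W}" unfolding Xc_def X_def by simp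
  have XcP: "\<And>x. x \<in> Xc \<Longrightarrow> x \<in> lcarrier P" unfolding Xc by blast
  have Xsub: "submodule Xc P" unfolding Xc by (rule kernel_submodule[OF PM W ph])
  obtain f g where f: "f \<in> lhom X M" and g: "g \<in> lhom M X"
    and fp1: "factors_through_proj X X (\<lambda>x. lsub X (g (f x)) x)"
    and fp2: "factors_through_proj M M (\<lambda>y. lsub M (f (g y)) y)"
    using si unfolding stably_iso_def X_def by blast
  obtain Q' :: "('a, nat \<Rightarrow> 'a) lmod" and u' v' where Q': "fg_projective Q'" and u': "u' \<in> lhom X Q'"
    and v': "v' \<in> lhom Q' X" and uv': "\<forall>x\<in>lcarrier X. lsub X (g (f x)) x = v' (u' x)"
    using fp1 unfolding factors_through_proj_def by blast
  obtain Q :: "('a, nat \<Rightarrow> 'a) lmod" and u v where Q: "fg_projective Q" and u: "u \<in> lhom M Q"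
    and v: "v \<in> lhom Q M" and uv: "\<forall>y\<in>lcarrier M. lsub M (f (g y)) y = v (u y)"
    using fp2 unfolding factors_through_proj_def by blast
  have QM: "lmodule Q" and Q'M: "lmodule Q'" using fg_projectiveD(1) Q Q' by blast+
  have ext': "\<forall>\<phi>\<in>lhom X regmod. \<exists>\<psi>\<in>lhom P regmod. \<forall>x\<in>lcarrier X. \<psi> x = \<phi> x" using ext unfolding X_def .
  obtain w' where w': "w' \<in> lhom P Q'" and w'e: "\<forall>x\<in>lcarrier X. w' x = u' x"
    using ext_to_proj[OF XM PM Q' ext' u'] by blast
  obtain w'' where w'': "w'' \<in> lhom P Q" and w''e: "\<forall>x\<in>lcarrier X. w'' x = u (f x)"
    using ext_to_proj[OF XM PM Q ext' lhom_comp[OF f u]] by blast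
  define D where "D = dsum P Q"
  have DP: "fg_projective D" unfolding D_def by (rule dsum_projective[OF P Q])
  have DM: "lmodule D" using fg_projectiveD(1)[OF DP] .
  have Dc: "\<And>z. z \<in> lcarrier D \<longleftrightarrow> dfst z \<in> lcarrier P \<and> dsnd z \<in> lcarrier Q" unfolding D_def by (rule dsum_carrier)
  have Dsub: "\<And>z w. lsub D z w = enc (lsub P (dfst z) (dfst w)) (lsub Q (dsnd z) (dsnd w))"
    unfolding D_def by (rule dsum_lsub)
  have Dzero: "lzero D = enc (lzero P) (lzero Q)" unfolding D_def by simp
  define XQc where "XQc = {z \<in> lcarrier D. dfst z \<in> Xc}"
  have XQsub: "submodule XQc D" unfolding XQc_def
  proof -
    have "dfst \<in> lhom D P" unfolding D_def by (rule dfst_hom)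
    thus "submodule {z \<in> lcarrier D. dfst z \<in> Xc} D" by (rule preimage_submodule[OF DM PM _ Xsub])
  qed
  define XQ where "XQ = D\<lparr>lcarrier := XQc\<rparr>"
  have XQM: "lmodule XQ" unfolding XQ_def by (rule submodule_lmodule[OF DM XQsub])
  have XQcD: "XQc \<subseteq> lcarrier D" using submoduleD(1)[OF XQsub] .
  have gP: "g \<in> lhom M P" using lhom_kernel_target[OF g[unfolded X_def]] .
  have gX: "\<And>m. m \<in> lcarrier M \<Longrightarrow> g m \<in> Xc" unfolding Xc_def using lhom_closed[OF g] by blast
  define \<sigma> where "\<sigma> = (\<lambda>m. enc (g m) (lsmult Q (-1) (u m)))"
  have \<sigma>D: "\<sigma> \<in> lhom M D" unfolding \<sigma>_def D_def by (rule enc_hom[OF gP lhom_neg[OF QM u]])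
  have \<sigma>XQ: "\<And>m. m \<in> lcarrier M \<Longrightarrow> \<sigma> m \<in> XQc"
    unfolding XQc_def using lhom_closed[OF \<sigma>D] gX unfolding \<sigma>_def by simp
  define \<tau> where "\<tau> = (\<lambda>z. ladd M (f (dfst z)) (v (dsnd z)))"
  have fXQ: "(\<lambda>z. f (dfst z)) \<in> lhom XQ M"
  proof -
    have "dfst \<in> lhom XQ X"
      unfolding lhom_def XQ_def XQc_def X_def D_def Xc_def[unfolded X_def]
      by (auto simp: dsum_carrier)
    thus ?thesis by (rule lhom_comp[OF _ f])
  qed
  have vXQ: "(\<lambda>z. v (dsnd z)) \<in> lhom XQ M"
  proof -
    have "dsnd \<in> lhom XQ Q" unfolding XQ_def D_def
      by (rule lhom_restrict[OF XQcD[unfolded D_def] dsnd_hom])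
    thus ?thesis by (rule lhom_comp[OF _ v])
  qed
  have \<tau>h: "\<tau> \<in> lhom XQ M" unfolding \<tau>_def by (rule lhom_ladd[OF M fXQ vXQ])
  have \<tau>\<sigma>: "\<And>m. m \<in> lcarrier M \<Longrightarrow> \<tau> (\<sigma> m) = m"
  proof -
    fix m assume m: "m \<in> lcarrier M"
    have um: "u m \<in> lcarrier Q" using lhom_closed[OF u m] .
    have gm: "g m \<in> lcarrier X" using lhom_closed[OF g m] .
    have fgm: "f (g m) \<in> lcarrier M" using lhom_closed[OF f gm] .
    have "\<tau> (\<sigma> m) = ladd M (f (g m)) (lsmult M (-1) (v (u m)))"
      unfolding \<tau>_def \<sigma>_def using lhom_smult[OF v um] by simp
    also have "\<dots> = lsub M (f (g m)) (lsub M (f (g m)) m)" using uv m unfolding lsub_def by simp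
    also have "\<dots> = m" using lsub_lsub[OF M fgm m] .
    finally show "\<tau> (\<sigma> m) = m" .
  qed
  define kk where "kk = (\<lambda>z. enc (lsmult P (-1) (v' (w' (dfst z)))) (ladd Q (dsnd z) (w'' (dfst z))))"
  have v'P: "v' \<in> lhom Q' P" using lhom_kernel_target[OF v'[unfolded X_def]] .
  have kkD: "kk \<in> lhom D D" unfolding kk_def D_def
    by (rule enc_hom[OF lhom_neg[OF PM lhom_comp[OF lhom_comp[OF dfst_hom w'] v'P]]
                        lhom_ladd[OF QM dsnd_hom lhom_comp[OF dfst_hom w'']]])
  have kkXQ: "\<And>z. z \<in> lcarrier D \<Longrightarrow> kk z \<in> XQc"
  proof -
    fix z assume z: "z \<in> lcarrier D"
    have "v' (w' (dfst z)) \<in> Xc" unfolding Xc_def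
      using lhom_closed[OF v' lhom_closed[OF w']] z Dc by blast
    hence "lsmult P (-1) (v' (w' (dfst z))) \<in> Xc" using submoduleD(4)[OF Xsub] by blast
    thus "kk z \<in> XQc" unfolding XQc_def using lhom_closed[OF kkD z] unfolding kk_def by simp
  qed
  have kkXQh: "kk \<in> lhom D XQ" unfolding XQ_def using lhom_into_sub[OF kkD _ XQcD] kkXQ by blast
  define E where "E = (\<lambda>z. lsub D (kk z) (\<sigma> (\<tau> (kk z))))"
  have Eh: "E \<in> lhom D D" unfolding E_def
    by (rule lhom_lsub[OF DM kkD lhom_comp[OF lhom_comp[OF kkXQh \<tau>h] \<sigma>D]])
  have EXQ: "\<And>z. z \<in> lcarrier D \<Longrightarrow> E z \<in> XQc"
  proof -
    fix z assume z: "z \<in> lcarrier D"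
    have a: "kk z \<in> XQc" using kkXQ[OF z] .
    have b: "\<sigma> (\<tau> (kk z)) \<in> XQc" using \<sigma>XQ lhom_closed[OF \<tau>h] a unfolding XQ_def by simp
    have "lsub D (kk z) (\<sigma> (\<tau> (kk z))) \<in> XQc"
      unfolding lsub_def using submoduleD(3,4)[OF XQsub] a b by blast
    thus "E z \<in> XQc" unfolding E_def .
  qed
  have inXQ: "\<And>z. z \<in> XQc \<longleftrightarrow> dfst z \<in> lcarrier X \<and> dsnd z \<in> lcarrier Q"
    unfolding XQc_def Xc_def using Dc XcP Xc_def by blast
  have Estar: "\<And>z. z \<in> XQc \<Longrightarrow> E z = lsub D z (\<sigma> (\<tau> z))"
  proof -
    fix z assume z: "z \<in> XQc"
    have x: "dfst z \<in> lcarrier X" and y: "dsnd z \<in> lcarrier Q" using z inXQ by blast+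
    have xP: "dfst z \<in> lcarrier P" using x XcP Xc_def by blast
    have zD: "z \<in> lcarrier D" using z XQcD by blast
    define x0 where "x0 = dfst z"
    define fx where "fx = f x0"
    have fx: "fx \<in> lcarrier M" unfolding fx_def x0_def using lhom_closed[OF f x] .
    have gfx: "g fx \<in> lcarrier X" using lhom_closed[OF g fx] .
    have gfxP: "g fx \<in> lcarrier P" using gfx unfolding X_def by simp
    have ufx: "u fx \<in> lcarrier Q" using lhom_closed[OF u fx] .
    have sfx: "\<sigma> fx \<in> XQc" using \<sigma>XQ[OF fx] .
    have sfxD: "\<sigma> fx \<in> lcarrier D" using sfx XQcD by blast
    have k1: "lsmult P (-1) (v' (w' x0)) = lsub P x0 (g fx)"
    proof -
      have "v' (w' x0) = lsub X (g fx) x0" using uv' x w'e unfolding fx_def x0_def by simp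
      hence "v' (w' x0) = lsub P (g fx) x0" unfolding X_def by simp
      thus ?thesis using lsub_swap[OF PM xP[folded x0_def] gfxP] by simp
    qed
    have k2: "ladd Q (dsnd z) (w'' x0) = lsub Q (dsnd z) (lsmult Q (-1) (u fx))"
      using lsub_neg[OF QM y ufx] w''e x unfolding fx_def x0_def by simp
    have kkz: "kk z = lsub D z (\<sigma> fx)"
      unfolding kk_def Dsub \<sigma>_def using k1 k2 unfolding x0_def by simp
    have tk: "\<tau> (kk z) = lsub M (\<tau> z) fx"
    proof -
      have "\<tau> (kk z) = lsub M (\<tau> z) (\<tau> (\<sigma> fx))"
        using kkz lhom_sub[OF \<tau>h, of z "\<sigma> fx"] z sfx XQM unfolding XQ_def by simp
      thus ?thesis using \<tau>\<sigma>[OF fx] by simp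
    qed
    have tz: "\<tau> z \<in> lcarrier M" using lhom_closed[OF \<tau>h] z unfolding XQ_def by simp
    have "\<sigma> (\<tau> (kk z)) = lsub D (\<sigma> (\<tau> z)) (\<sigma> fx)"
      using tk lhom_sub[OF \<sigma>D tz fx M] by simp
    hence "E z = lsub D (lsub D z (\<sigma> fx)) (lsub D (\<sigma> (\<tau> z)) (\<sigma> fx))"
      unfolding E_def kkz[symmetric] by simp
    also have "\<dots> = lsub D z (\<sigma> (\<tau> z))"
      using lsub_lsub_cancel[OF DM zD sfxD lhom_closed[OF \<sigma>D tz]] .
    finally show "E z = lsub D z (\<sigma> (\<tau> z))" .
  qed
  have \<tau>E: "\<And>z. z \<in> lcarrier D \<Longrightarrow> \<tau> (E z) = lzero M"
  proof -
    fix z assume z: "z \<in> lcarrier D"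
    have a: "kk z \<in> XQc" using kkXQ[OF z] .
    have tk: "\<tau> (kk z) \<in> lcarrier M" using lhom_closed[OF \<tau>h] a unfolding XQ_def by simp
    have b: "\<sigma> (\<tau> (kk z)) \<in> XQc" using \<sigma>XQ[OF tk] .
    have "\<tau> (E z) = lsub M (\<tau> (kk z)) (\<tau> (\<sigma> (\<tau> (kk z))))"
      unfolding E_def using lhom_sub[OF \<tau>h, of "kk z" "\<sigma> (\<tau> (kk z))"] a b XQM unfolding XQ_def by simp
    thus "\<tau> (E z) = lzero M" using \<tau>\<sigma>[OF tk] lsub_self[OF M tk] by simp
  qed
  have \<sigma>0: "\<sigma> (lzero M) = lzero D" using lhom_zero[OF M DM \<sigma>D] .
  have EE: "\<And>z. z \<in> lcarrier D \<Longrightarrow> E (E z) = E z"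
  proof -
    fix z assume z: "z \<in> lcarrier D"
    have "E (E z) = lsub D (E z) (\<sigma> (\<tau> (E z)))" using Estar[OF EXQ[OF z]] .
    also have "\<dots> = E z" using \<tau>E[OF z] \<sigma>0 lsub_zero[OF DM lhom_closed[OF Eh z]] by simp
    finally show "E (E z) = E z" .
  qed
  define P''c where "P''c = {z \<in> lcarrier D. E z = lzero D}"
  have P''sub: "submodule P''c D" unfolding P''c_def by (rule kernel_submodule[OF DM DM Eh])
  have P''cD: "P''c \<subseteq> lcarrier D" using submoduleD(1)[OF P''sub] .
  define P'' where "P'' = D\<lparr>lcarrier := P''c\<rparr>"
  have P''M: "lmodule P''" unfolding P''_def by (rule submodule_lmodule[OF DM P''sub])
  define r where "r = (\<lambda>z. lsub D z (E z))"
  have rD: "r \<in> lhom D D" unfolding r_def by (rule lhom_lsub[OF DM lhom_id Eh])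
  have rP: "\<And>z. z \<in> lcarrier D \<Longrightarrow> r z \<in> P''c"
  proof -
    fix z assume z: "z \<in> lcarrier D"
    have Ez: "E z \<in> lcarrier D" using lhom_closed[OF Eh z] .
    have "E (r z) = lsub D (E z) (E (E z))" unfolding r_def using lhom_sub[OF Eh z Ez DM] .
    also have "\<dots> = lzero D" using EE[OF z] lsub_self[OF DM Ez] by simp
    finally show "r z \<in> P''c" unfolding P''c_def using lhom_closed[OF rD z] by simp
  qed
  have rid: "\<forall>z\<in>P''c. r z = z"
    unfolding P''c_def r_def using lsub_zero[OF DM] by auto
  have rh: "r \<in> lhom D (D\<lparr>lcarrier := P''c\<rparr>)" using lhom_into_sub[OF rD _ P''cD] rP by blast
  have P''P: "fg_projective P''" unfolding P''_def by (rule retract_projective[OF DP P''sub rh rid])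
  define q where "q = (\<lambda>z. p (dfst z))"
  have qD: "q \<in> lhom D W" unfolding q_def D_def by (rule lhom_comp[OF dfst_hom ph])
  have qh: "q \<in> lhom P'' W" unfolding P''_def by (rule lhom_restrict[OF P''cD qD])
  have qXQ: "\<And>z. z \<in> XQc \<Longrightarrow> q z = lzero W" unfolding q_def XQc_def Xc by simp
  have qo: "q ` lcarrier P'' = lcarrier W"
  proof
    show "q ` lcarrier P'' \<subseteq> lcarrier W" using lhom_closed[OF qh] by blast
    show "lcarrier W \<subseteq> q ` lcarrier P''"
    proof
      fix w assume "w \<in> lcarrier W"
      hence "w \<in> p ` lcarrier P" using po by simp
      then obtain x where x: "x \<in> lcarrier P" "p x = w" by blast
      define z where "z = enc x (lzero Q)"
      have z: "z \<in> lcarrier D" unfolding z_def using Dc x QM by (simp add: lzero_closed)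
      have Ez: "E z \<in> lcarrier D" using lhom_closed[OF Eh z] .
      have "q (r z) = lsub W (q z) (q (E z))" unfolding r_def using lhom_sub[OF qD z Ez DM] .
      also have "\<dots> = lsub W w (lzero W)" using qXQ[OF EXQ[OF z]] x unfolding q_def z_def by simp
      also have "\<dots> = w" using lsub_zero[OF W] \<open>w \<in> lcarrier W\<close> by simp
      finally have "q (r z) = w" .
      moreover have "r z \<in> lcarrier P''" unfolding P''_def using rP[OF z] by simp
      ultimately show "w \<in> q ` lcarrier P''" by (metis image_eqI)
    qed
  qed
  have \<sigma>P'': "\<And>m. m \<in> lcarrier M \<Longrightarrow> \<sigma> m \<in> P''c"
  proof -
    fix m assume m: "m \<in> lcarrier M"
    have "E (\<sigma> m) = lsub D (\<sigma> m) (\<sigma> m)" using Estar[OF \<sigma>XQ[OF m]] \<tau>\<sigma>[OF m] by simp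
    also have "\<dots> = lzero D" using lsub_self[OF DM lhom_closed[OF \<sigma>D m]] .
    finally show "\<sigma> m \<in> P''c" unfolding P''c_def using lhom_closed[OF \<sigma>D m] by simp
  qed
  have \<sigma>h: "\<sigma> \<in> lhom M P''" unfolding P''_def using lhom_into_sub[OF \<sigma>D _ P''cD] \<sigma>P'' by blast
  have \<sigma>inj: "inj_on \<sigma> (lcarrier M)"
    by (rule inj_on_inverseI[of _ \<tau>]) (rule \<tau>\<sigma>)
  have \<sigma>img: "\<sigma> ` lcarrier M = {z \<in> lcarrier P''. q z = lzero W}"
  proof
    show "\<sigma> ` lcarrier M \<subseteq> {z \<in> lcarrier P''. q z = lzero W}"
      using \<sigma>P'' qXQ \<sigma>XQ unfolding P''_def by auto
    show "{z \<in> lcarrier P''. q z = lzero W} \<subseteq> \<sigma> ` lcarrier M"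
    proof
      fix z assume "z \<in> {z \<in> lcarrier P''. q z = lzero W}"
      hence zP: "z \<in> P''c" and qz: "q z = lzero W" unfolding P''_def by auto
      have zD: "z \<in> lcarrier D" using zP P''cD by blast
      have zXQ: "z \<in> XQc" unfolding XQc_def Xc using zD qz Dc unfolding q_def by blast
      have tz: "\<tau> z \<in> lcarrier M" using lhom_closed[OF \<tau>h] zXQ unfolding XQ_def by simp
      have "lsub D z (\<sigma> (\<tau> z)) = lzero D" using Estar[OF zXQ] zP unfolding P''c_def by simp
      hence "z = \<sigma> (\<tau> z)" using lsub_eq_zero[OF DM zD lhom_closed[OF \<sigma>D tz]] by blast
      thus "z \<in> \<sigma> ` lcarrier M" using tz by blast
    qed
  qed
  show ?thesis using P''P qh qo \<sigma>h \<sigma>inj \<sigma>img by blast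
qed



definition lvl :: "nat \<Rightarrow> int \<Rightarrow> nat" where "lvl n i = n - nat (i mod int n)"

lemma lvl_range: "n \<ge> 1 \<Longrightarrow> 1 \<le> lvl n i \<and> lvl n i \<le> n"
proof -
  assume n: "n \<ge> 1"
  have "0 \<le> i mod int n" "i mod int n < int n" using n by auto
  thus ?thesis unfolding lvl_def by linarith
qed

lemma lvl_suc: "n \<ge> 1 \<Longrightarrow> lvl n (i + 1) = (if lvl n i = 1 then n else lvl n i - 1)"
proof -
  assume n: "n \<ge> 1"
  define r where "r = i mod int n"
  have r: "0 \<le> r" "r < int n" unfolding r_def using n by auto
  have e: "(i + 1) mod int n = (r + 1) mod int n" unfolding r_def by (simp add: mod_add_left_eq)
  show ?thesis
  proof (cases "r + 1 = int n")
    case True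
    hence "(i + 1) mod int n = 0" using e by simp
    moreover have "lvl n i = 1" unfolding lvl_def r_def[symmetric] using True r by linarith
    ultimately show ?thesis unfolding lvl_def by simp
  next
    case False
    hence "r + 1 < int n" using r by simp
    hence "(i + 1) mod int n = r + 1" using e r by simp
    moreover have "lvl n i \<noteq> 1" unfolding lvl_def r_def[symmetric] using False r by auto
    ultimately show ?thesis unfolding lvl_def r_def[symmetric] using r False by auto
  qed
qed

lemma lvl_pred: "n \<ge> 1 \<Longrightarrow> lvl n (i - 1) = (if lvl n i = n then 1 else lvl n i + 1)"
proof -
  assume n: "n \<ge> 1"
  have e: "lvl n i = (if lvl n (i - 1) = 1 then n else lvl n (i - 1) - 1)"
    using lvl_suc[OF n, of "i - 1"] by simp
  have r: "1 \<le> lvl n (i - 1)" "lvl n (i - 1) \<le> n" using lvl_range[OF n] by blast+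
  show ?thesis using e r by auto
qed

lemma lvl_per: "lvl n (i + int n) = lvl n i"
  unfolding lvl_def by simp

lemma lvl_0: "lvl n 0 = n"
  unfolding lvl_def by simp



context chain begin

lemma chain_mono: "1 \<le> k \<Longrightarrow> k \<le> N \<Longrightarrow> chain M k Pc p1 pc"
  by unfold_locales (use M proj p1h p1o pch pco in auto)

lemma transfer_k:
  assumes "1 \<le> k" "k \<le> N" "ext_vanishes M k"
  shows "\<forall>\<phi>\<in>lhom (C k) regmod. \<exists>\<psi>\<in>lhom (Pc k) regmod. \<forall>x\<in>lcarrier (C k). \<psi> x = \<phi> x"
proof -
  interpret c: chain M k Pc p1 pc using chain_mono assms by blast
  show ?thesis using c.transfer assms(3) by blast
qed

lemma assemble:
  assumes \<sigma>: "\<sigma> \<in> lhom M (Pc N)" and \<sigma>i: "inj_on \<sigma> (lcarrier M)"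
    and \<sigma>im: "\<sigma> ` lcarrier M = lcarrier (C N)"
    and ev: "\<forall>k. 1 \<le> k \<and> k \<le> N \<longrightarrow> ext_vanishes M k"
  shows "n_strongly_GP N M"
proof -
  define Pz where "Pz = (\<lambda>i. Pc (lvl N i))"
  define dz where "dz = (\<lambda>i x. if lvl N i = 1 then \<sigma> (p1 x) else pc (lvl N i) x)"
  have lv: "\<And>i. 1 \<le> lvl N i \<and> lvl N i \<le> N" using lvl_range[OF N1] by blast
  have PNM: "lmodule (Pc N)" using PM N1 by simp
  have \<sigma>0: "\<sigma> (lzero M) = lzero (Pc N)" using lhom_zero[OF M PNM \<sigma>] .
  have \<sigma>z: "\<And>m. m \<in> lcarrier M \<Longrightarrow> \<sigma> m = lzero (Pc N) \<longleftrightarrow> m = lzero M"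
    using \<sigma>i \<sigma>0 lzero_closed[OF M] unfolding inj_on_def by metis
  have lsuc: "\<And>i. lvl N (i + 1) = (if lvl N i = 1 then N else lvl N i - 1)" using lvl_suc[OF N1] by blast
  have hom_d: "\<And>i. dz i \<in> lhom (Pz i) (Pz (i + 1))"
  proof -
    fix i
    show "dz i \<in> lhom (Pz i) (Pz (i + 1))"
    proof (cases "lvl N i = 1")
      case True
      have "(\<lambda>x. \<sigma> (p1 x)) \<in> lhom (Pc 1) (Pc N)" by (rule lhom_comp[OF p1h \<sigma>])
      thus ?thesis unfolding Pz_def dz_def using True lsuc[of i] by simp
    next
      case False
      define k where "k = lvl N i"
      have k: "2 \<le> k" "k \<le> N" using lv[of i] False unfolding k_def by auto
      have "pc k \<in> lhom (Pc k) (Pc (k - 1))" using lhom_from_Cc[OF pch[OF k]] .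
      thus ?thesis unfolding Pz_def dz_def using False lsuc[of i] unfolding k_def by simp
    qed
  qed
  have kerC: "\<And>j. {x \<in> lcarrier (Pz j). dz j x = lzero (Pz (j + 1))} = lcarrier (C (lvl N j))"
  proof -
    fix j
    show "{x \<in> lcarrier (Pz j). dz j x = lzero (Pz (j + 1))} = lcarrier (C (lvl N j))"
    proof (cases "lvl N j = 1")
      case True
      have "{x \<in> lcarrier (Pc 1). \<sigma> (p1 x) = lzero (Pc N)} = {x \<in> lcarrier (Pc 1). p1 x = lzero M}"
        using \<sigma>z lhom_closed[OF p1h] by blast
      thus ?thesis unfolding Pz_def dz_def using True lsuc[of j] by (simp add: Cc_carrier1)
    next
      case False
      thus ?thesis unfolding Pz_def dz_def using False lsuc[of j] by (simp add: Cc_carrier2)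
    qed
  qed
  have imgC: "\<And>i. dz i ` lcarrier (Pz i) = lcarrier (C (lvl N (i + 1)))"
  proof -
    fix i
    show "dz i ` lcarrier (Pz i) = lcarrier (C (lvl N (i + 1)))"
    proof (cases "lvl N i = 1")
      case True
      have "dz i ` lcarrier (Pz i) = \<sigma> ` (p1 ` lcarrier (Pc 1))" unfolding dz_def Pz_def using True
        by (simp add: image_image)
      also have "\<dots> = lcarrier (C N)" using p1o \<sigma>im by simp
      finally show ?thesis using True lsuc[of i] by simp
    next
      case False
      define k where "k = lvl N i"
      have k: "2 \<le> k" "k \<le> N" using lv[of i] False unfolding k_def by auto
      have "dz i ` lcarrier (Pz i) = pc k ` lcarrier (Pc k)" unfolding dz_def Pz_def using False
        unfolding k_def by simp
      also have "\<dots> = lcarrier (C (k - 1))" using pco[OF k] .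
      finally show ?thesis using False lsuc[of i] unfolding k_def by simp
    qed
  qed
  have hexact: "\<And>i f. f \<in> lhom (Pz i) regmod \<Longrightarrow> (\<forall>x\<in>lcarrier (Pz (i - 1)). f (dz (i - 1) x) = 0) \<Longrightarrow>
      (\<exists>g\<in>lhom (Pz (i + 1)) regmod. \<forall>x\<in>lcarrier (Pz i). f x = g (dz i x))"
  proof -
    fix i f assume f: "f \<in> lhom (Pz i) regmod" and fz: "\<forall>x\<in>lcarrier (Pz (i - 1)). f (dz (i - 1) x) = 0"
    have img: "dz (i - 1) ` lcarrier (Pz (i - 1)) = lcarrier (C (lvl N i))" using imgC[of "i - 1"] by simp
    have van: "\<forall>x\<in>lcarrier (C (lvl N i)). f x = 0"
    proof
      fix x assume "x \<in> lcarrier (C (lvl N i))"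
      hence "x \<in> dz (i - 1) ` lcarrier (Pz (i - 1))" using img by simp
      thus "f x = 0" using fz by blast
    qed
    define k where "k = lvl N i"
    have kr: "1 \<le> k" "k \<le> N" using lv[of i] unfolding k_def by auto
    have PkM: "lmodule (Pc k)" using PM kr by simp
    show "\<exists>g\<in>lhom (Pz (i + 1)) regmod. \<forall>x\<in>lcarrier (Pz i). f x = g (dz i x)"
    proof (cases "k = 1")
      case True
      have f1: "f \<in> lhom (Pc 1) regmod" using f True unfolding Pz_def k_def by simp
      have van1: "\<forall>x\<in>lcarrier (Pc 1). p1 x = lzero M \<longrightarrow> f x = lzero regmod"
        using van True unfolding k_def by (simp add: Cc_carrier1)
      obtain f' where f': "f' \<in> lhom M regmod" and f'e: "\<forall>x\<in>lcarrier (Pc 1). f x = f' (p1 x)"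
        using factor_epi[OF PM[of 1] M regmod_lmodule p1h p1o f1 van1] N1 by auto
      have CNM: "lmodule (C N)" using CM N1 by simp
      have \<sigma>C: "\<sigma> \<in> lhom M (C N)" using lhom_into_Cc[of \<sigma> M Pc N, OF \<sigma>] \<sigma>im by blast
      have van2: "\<forall>m\<in>lcarrier M. \<sigma> m = lzero (C N) \<longrightarrow> f' m = lzero regmod"
        using \<sigma>z lhom_zero[OF M regmod_lmodule f'] by simp
      obtain h where h: "h \<in> lhom (C N) regmod" and he: "\<forall>m\<in>lcarrier M. f' m = h (\<sigma> m)"
        using factor_epi[OF M CNM regmod_lmodule \<sigma>C \<sigma>im f' van2] by blast
      obtain \<psi> where \<psi>: "\<psi> \<in> lhom (Pc N) regmod" and \<psi>e: "\<forall>x\<in>lcarrier (C N). \<psi> x = h x"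
        using transfer_k[OF N1 order.refl] ev N1 h by blast
      show ?thesis
      proof (intro bexI[of _ \<psi>] ballI)
        show "\<psi> \<in> lhom (Pz (i + 1)) regmod" unfolding Pz_def using \<psi> True lsuc[of i] unfolding k_def by simp
        fix x assume "x \<in> lcarrier (Pz i)"
        hence x: "x \<in> lcarrier (Pc 1)" using True unfolding Pz_def k_def by simp
        have "\<sigma> (p1 x) \<in> lcarrier (C N)" using \<sigma>im lhom_closed[OF p1h x] by blast
        thus "f x = \<psi> (dz i x)" unfolding dz_def using True f'e he \<psi>e x lhom_closed[OF p1h x]
          unfolding k_def by simp
      qed
    next
      case False
      have k2: "2 \<le> k" using False kr by simp
      have fk: "f \<in> lhom (Pc k) regmod" using f unfolding Pz_def k_def by simp
      have Ck1M: "lmodule (C (k - 1))" using CM kr k2 by simp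
      have vank: "\<forall>x\<in>lcarrier (Pc k). pc k x = lzero (C (k - 1)) \<longrightarrow> f x = lzero regmod"
        using van Cc_carrier2[of k M Pc p1 pc] False unfolding k_def by simp
      obtain f' where f': "f' \<in> lhom (C (k - 1)) regmod" and f'e: "\<forall>x\<in>lcarrier (Pc k). f x = f' (pc k x)"
        using factor_epi[OF PkM Ck1M regmod_lmodule pch[OF k2 kr(2)] pco[OF k2 kr(2)] fk vank] by blast
      have k1: "1 \<le> k - 1" "k - 1 \<le> N" using k2 kr by auto
      obtain \<psi> where \<psi>: "\<psi> \<in> lhom (Pc (k - 1)) regmod" and \<psi>e: "\<forall>x\<in>lcarrier (C (k - 1)). \<psi> x = f' x"
        using transfer_k[OF k1] ev k1 f' by blast
      show ?thesis
      proof (intro bexI[of _ \<psi>] ballI)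
        show "\<psi> \<in> lhom (Pz (i + 1)) regmod" unfolding Pz_def using \<psi> False lsuc[of i] unfolding k_def by simp
        fix x assume "x \<in> lcarrier (Pz i)"
        hence x: "x \<in> lcarrier (Pc k)" unfolding Pz_def k_def by simp
        have "pc k x \<in> lcarrier (C (k - 1))" using lhom_closed[OF pch[OF k2 kr(2)] x] .
        thus "f x = \<psi> (dz i x)" unfolding dz_def using False f'e \<psi>e x unfolding k_def by simp
      qed
    qed
  qed
  have ta: "totally_acyclic Pz dz"
    unfolding totally_acyclic_def
  proof (intro conjI allI ballI impI)
    fix i show "fg_projective (Pz i)" unfolding Pz_def using proj lv by blast
  next
    fix i show "dz i \<in> lhom (Pz i) (Pz (i + 1))" by (rule hom_d)
  next
    fix i
    have "{x \<in> lcarrier (Pz (i + 1)). dz (i + 1) x = lzero (Pz (i + 1 + 1))} = lcarrier (C (lvl N (i + 1)))"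
      by (rule kerC)
    moreover have "i + 1 + 1 = i + 2" by simp
    ultimately show "{x \<in> lcarrier (Pz (i + 1)). dz (i + 1) x = lzero (Pz (i + 2))} = dz i ` lcarrier (Pz i)"
      using imgC[of i] by simp
  next
    fix i f assume "f \<in> lhom (Pz i) regmod" "\<forall>x\<in>lcarrier (Pz (i - 1)). f (dz (i - 1) x) = 0"
    thus "\<exists>g\<in>lhom (Pz (i + 1)) regmod. \<forall>x\<in>lcarrier (Pz i). f x = g (dz i x)" by (rule hexact)
  qed
  have ns: "n_strong N Pz dz"
    unfolding n_strong_def using ta by (simp add: Pz_def dz_def lvl_per)
  have kz: "lcarrier (lkernel (Pz 0) (Pz 1) (dz 0)) = lcarrier (C N)"
    using kerC[of 0] lvl_0[of N] by simp
  have "lmod_iso M (lkernel (Pz 0) (Pz 1) (dz 0))"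
    unfolding lmod_iso_def
  proof (intro bexI[of _ \<sigma>])
    show "bij_betw \<sigma> (lcarrier M) (lcarrier (lkernel (Pz 0) (Pz 1) (dz 0)))"
      unfolding bij_betw_def kz using \<sigma>i \<sigma>im by blast
    have "\<sigma> \<in> lhom M (Pz 0)" unfolding Pz_def using \<sigma> lvl_0[of N] by simp
    thus "\<sigma> \<in> lhom M (lkernel (Pz 0) (Pz 1) (dz 0))"
      using kz \<sigma>im unfolding lhom_def lkernel_simps by auto
  qed
  thus ?thesis unfolding n_strongly_GP_def using ns by blast
qed

end



lemma inv_hom:
  assumes X: "lmodule X" and Y: "lmodule Y" and f: "f \<in> lhom X Y" and b: "bij_betw f (lcarrier X) (lcarrier Y)"
  shows "inv_into (lcarrier X) f \<in> lhom Y X"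
proof -
  let ?g = "inv_into (lcarrier X) f"
  have gc: "\<And>y. y \<in> lcarrier Y \<Longrightarrow> ?g y \<in> lcarrier X" using b by (metis bij_betw_def inv_into_into)
  have fg: "\<And>y. y \<in> lcarrier Y \<Longrightarrow> f (?g y) = y" using b by (meson bij_betw_inv_into_right)
  have gf: "\<And>x. x \<in> lcarrier X \<Longrightarrow> ?g (f x) = x" using b by (meson bij_betw_inv_into_left)
  show ?thesis unfolding lhom_def
  proof (intro CollectI conjI ballI allI)
    fix y assume "y \<in> lcarrier Y" thus "?g y \<in> lcarrier X" by (rule gc)
  next
    fix y1 y2 assume y1: "y1 \<in> lcarrier Y" and y2: "y2 \<in> lcarrier Y"
    have "f (ladd X (?g y1) (?g y2)) = ladd Y y1 y2" using lhom_add[OF f gc[OF y1] gc[OF y2]] fg y1 y2 by simp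
    hence "?g (ladd Y y1 y2) = ?g (f (ladd X (?g y1) (?g y2)))" by simp
    also have "\<dots> = ladd X (?g y1) (?g y2)" using gf ladd_closed[OF X gc[OF y1] gc[OF y2]] by blast
    finally show "?g (ladd Y y1 y2) = ladd X (?g y1) (?g y2)" .
  next
    fix a y assume y: "y \<in> lcarrier Y"
    have "f (lsmult X a (?g y)) = lsmult Y a y" using lhom_smult[OF f gc[OF y]] fg y by simp
    hence "?g (lsmult Y a y) = ?g (f (lsmult X a (?g y)))" by simp
    also have "\<dots> = lsmult X a (?g y)" using gf lsmult_closed[OF X gc[OF y]] by blast
    finally show "?g (lsmult Y a y) = lsmult X a (?g y)" .
  qed
qed

lemma zero_factors:
  fixes X :: "('a::ring_1, 'x) lmod" and Y :: "('a, 'y) lmod"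
  assumes X: "lmodule X" and Y: "lmodule Y" and Q: "fg_projective (Q :: ('a::ring_1, nat \<Rightarrow> 'a) lmod)"
    and h: "\<forall>x\<in>lcarrier X. h x = lzero Y"
  shows "factors_through_proj X Y h"
proof -
  have a: "(\<lambda>x. lzero Q) \<in> lhom X Q" by (rule lhom_zero_map[OF fg_projectiveD(1)[OF Q]])
  have b: "(\<lambda>x. lzero Y) \<in> lhom Q Y" by (rule lhom_zero_map[OF Y])
  show ?thesis unfolding factors_through_proj_def using Q a b h by fastforce
qed

lemma forward:
  fixes M :: "('a::ring_1, 'm) lmod"
  assumes M: "lmodule M" and n: "n \<ge> 1" and sg: "n_strongly_GP n M"
  shows "syzygy_stably_iso n M \<and> (\<forall>i. 1 \<le> i \<and> i \<le> n \<longrightarrow> ext_vanishes M i)"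
proof -
  obtain P d where ns: "n_strong n P d" and iso: "lmod_iso M (lkernel (P 0) (P 1) (d 0))"
    using sg unfolding n_strongly_GP_def by blast
  have ta: "totally_acyclic P d" using ns unfolding n_strong_def by blast
  have per: "\<And>i. P (i + int n) = P i" and perd: "\<And>i x. x \<in> lcarrier (P i) \<Longrightarrow> d (i + int n) x = d i x"
    using ns unfolding n_strong_def by blast+
  have proj: "\<And>i. fg_projective (P i)" using ta unfolding totally_acyclic_def by blast
  have PM: "\<And>i. lmodule (P i)" using proj fg_projectiveD(1) by blast
  have dh: "\<And>i. d i \<in> lhom (P i) (P (i + 1))" using ta unfolding totally_acyclic_def by blast
  have ex0: "\<forall>i. {x \<in> lcarrier (P (i + 1)). d (i + 1) x = lzero (P (i + 2))} = d i ` lcarrier (P i)"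
    using ta unfolding totally_acyclic_def by (elim conjE) assumption
  have ex: "\<And>j. d j ` lcarrier (P j) = {x \<in> lcarrier (P (j + 1)). d (j + 1) x = lzero (P (j + 1 + 1))}"
  proof -
    fix j :: int
    have "j + 2 = j + 1 + 1" by simp
    thus "d j ` lcarrier (P j) = {x \<in> lcarrier (P (j + 1)). d (j + 1) x = lzero (P (j + 1 + 1))}"
      using ex0 by metis
  qed
  have hx: "\<And>i f. f \<in> lhom (P i) regmod \<Longrightarrow> (\<forall>x\<in>lcarrier (P (i - 1)). f (d (i - 1) x) = 0) \<Longrightarrow>
        (\<exists>g\<in>lhom (P (i + 1)) regmod. \<forall>x\<in>lcarrier (P i). f x = g (d i x))"
    using ta unfolding totally_acyclic_def by blast
  define Z0 where "Z0 = lkernel (P 0) (P 1) (d 0)"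
  have Z0M: "lmodule Z0" unfolding Z0_def using lkernel_lmodule[OF PM PM dh[of 0]] by simp
  obtain \<phi> where \<phi>: "\<phi> \<in> lhom M Z0" and \<phi>b: "bij_betw \<phi> (lcarrier M) (lcarrier Z0)"
    using iso unfolding lmod_iso_def Z0_def by blast
  define \<psi> where "\<psi> = inv_into (lcarrier M) \<phi>"
  have \<psi>: "\<psi> \<in> lhom Z0 M" unfolding \<psi>_def by (rule inv_hom[OF M Z0M \<phi> \<phi>b])
  have \<psi>\<phi>: "\<And>z. z \<in> lcarrier Z0 \<Longrightarrow> \<phi> (\<psi> z) = z" unfolding \<psi>_def using \<phi>b by (meson bij_betw_inv_into_right)
  have \<psi>o: "\<psi> ` lcarrier Z0 = lcarrier M" unfolding \<psi>_def using \<phi>b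
    by (metis bij_betw_def bij_betw_inv_into)
  have \<psi>0: "\<And>z. z \<in> lcarrier Z0 \<Longrightarrow> \<psi> z = lzero M \<longleftrightarrow> z = lzero Z0"
    using \<psi>\<phi> lhom_zero[OF M Z0M \<phi>] lhom_zero[OF Z0M M \<psi>] by metis
  have Z0c: "lcarrier Z0 = {x \<in> lcarrier (P 0). d 0 x = lzero (P 1)}" unfolding Z0_def by simp
  have Z0z: "lzero Z0 = lzero (P 0)" unfolding Z0_def by simp
  have exm1: "d (-1) ` lcarrier (P (-1)) = lcarrier Z0" using ex[of "-1"] Z0c by simp
  have dZ: "d (-1) \<in> lhom (P (-1)) Z0"
    unfolding Z0_def using dh[of "-1"] exm1 unfolding lhom_def Z0_def by auto
  define e where "e = (\<lambda>x. \<psi> (d (-1) x))"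
  have eh: "e \<in> lhom (P (-1)) M" unfolding e_def by (rule lhom_comp[OF dZ \<psi>])
  have eo: "e ` lcarrier (P (-1)) = lcarrier M" unfolding e_def using exm1 \<psi>o by (simp add: image_image[symmetric])
  have ker_e: "\<And>x. x \<in> lcarrier (P (-1)) \<Longrightarrow> e x = lzero M \<longleftrightarrow> d (-1) x = lzero (P 0)"
    unfolding e_def using \<psi>0 lhom_closed[OF dZ] Z0z by simp
  define Zm where "Zm = (\<lambda>j. lkernel (P j) (P (j + 1)) (d j))"
  define Om where "Om = (\<lambda>k::nat. Zm (- int k))"
  have Omc: "\<And>j. lcarrier (Zm j) = {x \<in> lcarrier (P j). d j x = lzero (P (j + 1))}" unfolding Zm_def by simp
  have Omz: "\<And>j. lzero (Zm j) = lzero (P j)" unfolding Zm_def by simp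
  have syz1: "is_syzygy M (Om 1)"
    unfolding is_syzygy_def
  proof (intro exI conjI)
    show "fg_projective (P (-1))" by (rule proj)
    show "e \<in> lhom (P (-1)) M" by (rule eh)
    show "e ` lcarrier (P (-1)) = lcarrier M" by (rule eo)
    have "{x \<in> lcarrier (P (-1)). d (-1) x = lzero (P 0)} = {x \<in> lcarrier (P (-1)). e x = lzero M}"
      using ker_e by blast
    thus "Om 1 = lkernel (P (-1)) M e" unfolding Om_def Zm_def lkernel_def by simp
  qed
  have syzk: "\<And>k. is_syzygy (Om k) (Om (Suc k))"
  proof -
    fix k
    define j where "j = - int k - 1"
    have jj: "- int (Suc k) = j" "- int k = j + 1" unfolding j_def by simp_all
    have exj: "d j ` lcarrier (P j) = lcarrier (Om k)" unfolding Om_def jj using ex[of j] Omc by simp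
    have dj: "d j \<in> lhom (P j) (Om k)"
      using dh[of j] exj unfolding lhom_def Om_def jj Zm_def by auto
    show "is_syzygy (Om k) (Om (Suc k))"
      unfolding is_syzygy_def
    proof (intro exI conjI)
      show "fg_projective (P j)" by (rule proj)
      show "d j \<in> lhom (P j) (Om k)" by (rule dj)
      show "d j ` lcarrier (P j) = lcarrier (Om k)" by (rule exj)
      show "Om (Suc k) = lkernel (P j) (Om k) (d j)"
        unfolding Om_def jj Zm_def by (rule lkernel_cong) simp
    qed
  qed
  have Omn: "Om n = Z0"
  proof -
    have a: "P (- int n) = P 0" using per[of "- int n"] by simp
    have b: "P (- int n + 1) = P 1" using per[of "- int n + 1"] by simp
    have c: "\<And>x. x \<in> lcarrier (P (- int n)) \<Longrightarrow> d (- int n) x = d 0 x" using perd[of _ "- int n"] by simp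
    have "{x \<in> lcarrier (P (- int n)). d (- int n) x = lzero (P (- int n + 1))} = {x \<in> lcarrier (P 0). d 0 x = lzero (P 1)}"
      using a b c by auto
    thus ?thesis unfolding Om_def Zm_def Z0_def lkernel_def using a by simp
  qed
  have si: "stably_iso (Om n) M"
    unfolding Omn stably_iso_def
  proof (intro bexI conjI)
    show "\<psi> \<in> lhom Z0 M" by (rule \<psi>)
    show "\<phi> \<in> lhom M Z0" by (rule \<phi>)
    show "factors_through_proj Z0 Z0 (\<lambda>x. lsub Z0 (\<phi> (\<psi> x)) x)"
      by (rule zero_factors[OF Z0M Z0M proj[of 0]]) (simp add: \<psi>\<phi> lsub_self[OF Z0M])
    show "factors_through_proj M M (\<lambda>y. lsub M (\<psi> (\<phi> y)) y)"
    proof (rule zero_factors[OF M M proj[of 0]], intro ballI)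
      fix y assume y: "y \<in> lcarrier M"
      have "\<psi> (\<phi> y) = y" unfolding \<psi>_def using \<phi>b y by (meson bij_betw_inv_into_left)
      thus "lsub M (\<psi> (\<phi> y)) y = lzero M" using lsub_self[OF M y] by simp
    qed
  qed
  have ssi: "syzygy_stably_iso n M"
    unfolding syzygy_stably_iso_def using syz1 syzk si by blast
  define R where "R = (\<lambda>k::nat. P (-1 - int k))"
  define dd where "dd = (\<lambda>k::nat. d (-2 - int k))"
  have Rs: "\<And>k. R (Suc k) = P (-2 - int k)" unfolding R_def by (rule arg_cong[where f=P]) simp
  have res: "proj_resolution M R dd e"
    unfolding proj_resolution_def
  proof (intro conjI allI)
    fix k show "fg_projective (R k)" unfolding R_def by (rule proj)
  next
    show "e \<in> lhom (R 0) M" unfolding R_def using eh by simp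
    show "e ` lcarrier (R 0) = lcarrier M" unfolding R_def using eo by simp
  next
    fix k
    have "-2 - int k + 1 = -1 - int k" by simp
    thus "dd k \<in> lhom (R (Suc k)) (R k)" unfolding Rs dd_def R_def using dh[of "-2 - int k"] by simp
  next
    have "{x \<in> lcarrier (P (-1)). e x = lzero M} = {x \<in> lcarrier (P (-1)). d (-1) x = lzero (P 0)}"
      using ker_e by blast
    also have "\<dots> = d (-2) ` lcarrier (P (-2))" using ex[of "-2"] by simp
    finally show "{x \<in> lcarrier (R 0). e x = lzero M} = dd 0 ` lcarrier (R 1)"
      unfolding R_def dd_def by simp
  next
    fix k
    have a: "-3 - int k + 1 = -2 - int k" "-2 - int k + 1 = -1 - int k" by simp_all
    have "d (-3 - int k) ` lcarrier (P (-3 - int k)) =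
       {x \<in> lcarrier (P (-2 - int k)). d (-2 - int k) x = lzero (P (-1 - int k))}"
      using ex[of "-3 - int k"] unfolding a .
    moreover have "R (Suc (Suc k)) = P (-3 - int k)" unfolding R_def by (rule arg_cong[where f=P]) simp
    moreover have "dd (Suc k) = d (-3 - int k)" unfolding dd_def by (rule arg_cong[where f=d]) simp
    ultimately show "{x \<in> lcarrier (R (Suc k)). dd k x = lzero (R k)} = dd (Suc k) ` lcarrier (R (Suc (Suc k)))"
      unfolding Rs unfolding dd_def R_def by simp
  qed
  have evs: "\<forall>i. 1 \<le> i \<and> i \<le> n \<longrightarrow> ext_vanishes M i"
  proof (intro allI impI)
    fix i :: nat assume i: "1 \<le> i \<and> i \<le> n"
    define j where "j = -1 - int i"
    have j1: "R i = P j" unfolding R_def j_def by simp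
    have j2: "R (Suc i) = P (j - 1)" unfolding Rs j_def by simp
    have j3: "dd i = d (j - 1)" unfolding dd_def j_def by (rule arg_cong[where f=d]) simp
    have j4: "R (i - 1) = P (j + 1)" unfolding R_def j_def using i by (simp add: of_nat_diff)
    have j5: "dd (i - 1) = d j" unfolding dd_def j_def using i by (intro arg_cong[where f=d]) (simp add: of_nat_diff)
    have "\<forall>f\<in>lhom (R i) regmod. (\<forall>x\<in>lcarrier (R (Suc i)). f (dd i x) = 0) \<longrightarrow>
        (\<exists>g\<in>lhom (R (i - 1)) regmod. \<forall>x\<in>lcarrier (R i). f x = g (dd (i - 1) x))"
      unfolding j1 j2 j3 j4 j5 using hx[of _ j] by blast
    thus "ext_vanishes M i"
      unfolding ext_vanishes_def using res by blast
  qed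
  show ?thesis using ssi evs by blast
qed



lemma backward:
  fixes M :: "('a::ring_1, 'm) lmod"
  assumes M: "lmodule M" and n: "n \<ge> 1" and ssi: "syzygy_stably_iso n M"
    and ev: "\<forall>i. 1 \<le> i \<and> i \<le> n \<longrightarrow> ext_vanishes M i"
  shows "n_strongly_GP n M"
proof -
  obtain Om :: "nat \<Rightarrow> ('a, nat \<Rightarrow> 'a) lmod" where s1: "is_syzygy M (Om 1)"
    and sk: "\<forall>k. 1 \<le> k \<and> k < n \<longrightarrow> is_syzygy (Om k) (Om (Suc k))" and si: "stably_iso (Om n) M"
    using ssi unfolding syzygy_stably_iso_def by blast
  obtain P1 p1 where P1: "fg_projective P1" and p1h: "p1 \<in> lhom P1 M" and p1o: "p1 ` lcarrier P1 = lcarrier M"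
    and Om1: "Om 1 = lkernel P1 M p1"
    using s1 unfolding is_syzygy_def by blast
  have "\<forall>k. \<exists>Pp. 1 \<le> k \<and> k < n \<longrightarrow> fg_projective (fst Pp) \<and> snd Pp \<in> lhom (fst Pp) (Om k) \<and>
      snd Pp ` lcarrier (fst Pp) = lcarrier (Om k) \<and> Om (Suc k) = lkernel (fst Pp) (Om k) (snd Pp)"
  proof
    fix k
    show "\<exists>Pp. 1 \<le> k \<and> k < n \<longrightarrow> fg_projective (fst Pp) \<and> snd Pp \<in> lhom (fst Pp) (Om k) \<and>
      snd Pp ` lcarrier (fst Pp) = lcarrier (Om k) \<and> Om (Suc k) = lkernel (fst Pp) (Om k) (snd Pp)"
    proof (cases "1 \<le> k \<and> k < n")
      case True
      then obtain P p where "fg_projective P" "p \<in> lhom P (Om k)" "p ` lcarrier P = lcarrier (Om k)"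
        "Om (Suc k) = lkernel P (Om k) p"
        using sk unfolding is_syzygy_def by blast
      thus ?thesis by (intro exI[of _ "(P, p)"]) simp
    next
      case False thus ?thesis by blast
    qed
  qed
  then obtain F where F: "\<And>k. 1 \<le> k \<Longrightarrow> k < n \<Longrightarrow> fg_projective (fst (F k)) \<and> snd (F k) \<in> lhom (fst (F k)) (Om k) \<and>
      snd (F k) ` lcarrier (fst (F k)) = lcarrier (Om k) \<and> Om (Suc k) = lkernel (fst (F k)) (Om k) (snd (F k))"
    by (metis (no_types, lifting) choice)
  define Pc where "Pc = (\<lambda>k. if k = 1 then P1 else fst (F (k - 1)))"
  define pc where "pc = (\<lambda>k. snd (F (k - 1)))"
  have OmC: "\<And>k. 1 \<le> k \<Longrightarrow> k \<le> n \<Longrightarrow> Om k = Cc M Pc p1 pc k"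
  proof -
    fix k :: nat assume "1 \<le> k" "k \<le> n"
    thus "Om k = Cc M Pc p1 pc k"
    proof (induction k rule: nat_induct_at_least)
      case base thus ?case using Om1 unfolding Cc_def Pc_def by simp
    next
      case (Suc k)
      have IH: "Om k = Cc M Pc p1 pc k" using Suc by simp
      have "Om (Suc k) = lkernel (fst (F k)) (Om k) (snd (F k))" using F[of k] Suc by simp
      also have "\<dots> = lkernel (Pc (Suc k)) (Cc M Pc p1 pc (Suc k - 1)) (pc (Suc k))"
      proof -
        have "Pc (Suc k) = fst (F k)" "pc (Suc k) = snd (F k)" unfolding Pc_def pc_def using Suc by auto
        thus ?thesis using IH by simp
      qed
      also have "\<dots> = Cc M Pc p1 pc (Suc k)" using Cc_alt[of "Suc k" M Pc p1 pc] Suc by simp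
      finally show ?case .
    qed
  qed
  have ch: "chain M n Pc p1 pc"
  proof
    show "lmodule M" by (rule M)
    show "1 \<le> n" by (rule n)
    show "\<And>k. 1 \<le> k \<Longrightarrow> k \<le> n \<Longrightarrow> fg_projective (Pc k)"
      unfolding Pc_def using P1 F by (auto simp: le_diff_conv2)
    show "p1 \<in> lhom (Pc 1) M" unfolding Pc_def using p1h by simp
    show "p1 ` lcarrier (Pc 1) = lcarrier M" unfolding Pc_def using p1o by simp
    show "\<And>k. 2 \<le> k \<Longrightarrow> k \<le> n \<Longrightarrow> pc k \<in> lhom (Pc k) (Cc M Pc p1 pc (k - 1))"
    proof -
      fix k :: nat assume k: "2 \<le> k" "k \<le> n"
      have "snd (F (k - 1)) \<in> lhom (fst (F (k - 1))) (Om (k - 1))" using F[of "k - 1"] k by simp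
      moreover have "Pc k = fst (F (k - 1))" "pc k = snd (F (k - 1))" unfolding Pc_def pc_def using k by auto
      ultimately show "pc k \<in> lhom (Pc k) (Cc M Pc p1 pc (k - 1))" using OmC[of "k - 1"] k by simp
    qed
    show "\<And>k. 2 \<le> k \<Longrightarrow> k \<le> n \<Longrightarrow> pc k ` lcarrier (Pc k) = lcarrier (Cc M Pc p1 pc (k - 1))"
    proof -
      fix k :: nat assume k: "2 \<le> k" "k \<le> n"
      have "snd (F (k - 1)) ` lcarrier (fst (F (k - 1))) = lcarrier (Om (k - 1))" using F[of "k - 1"] k by simp
      moreover have "Pc k = fst (F (k - 1))" "pc k = snd (F (k - 1))" unfolding Pc_def pc_def using k by auto
      ultimately show "pc k ` lcarrier (Pc k) = lcarrier (Cc M Pc p1 pc (k - 1))" using OmC[of "k - 1"] k by simp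
    qed
  qed
  interpret chain M n Pc p1 pc by (rule ch)
  have extn: "\<forall>\<phi>\<in>lhom (C n) regmod. \<exists>\<psi>\<in>lhom (Pc n) regmod. \<forall>x\<in>lcarrier (C n). \<psi> x = \<phi> x"
    using transfer_k[OF n order.refl] ev n by blast
  have siC: "stably_iso (C n) M" using si OmC[OF n order.refl] by simp
  show ?thesis
  proof (cases "n = 1")
    case True
    have C1: "C 1 = lkernel (Pc 1) M p1" unfolding Cc_def by simp
    obtain P'' q \<sigma> where P'': "fg_projective P''" and qh: "q \<in> lhom P'' M" and qo: "q ` lcarrier P'' = lcarrier M"
      and \<sigma>h: "\<sigma> \<in> lhom M P''" and \<sigma>i: "inj_on \<sigma> (lcarrier M)"
      and \<sigma>im: "\<sigma> ` lcarrier M = {z \<in> lcarrier P''. q z = lzero M}"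
      using modify[OF proj[OF order.refl n] M M p1h p1o] extn siC unfolding C1 True by blast
    define Pc' where "Pc' = Pc(1 := P'')"
    have ch': "chain M n Pc' q pc"
      by unfold_locales (use M n P'' qh qo True in \<open>auto simp: Pc'_def\<close>)
    interpret c': chain M n Pc' q pc by (rule ch')
    have "\<sigma> ` lcarrier M = lcarrier (Cc M Pc' q pc n)" unfolding \<sigma>im Cc_def Pc'_def using True by simp
    moreover have "\<sigma> \<in> lhom M (Pc' n)" unfolding Pc'_def using \<sigma>h True by simp
    ultimately show ?thesis using c'.assemble \<sigma>i ev by blast
  next
    case False
    hence n2: "2 \<le> n" using n by simp
    have Cn: "C n = lkernel (Pc n) (C (n - 1)) (pc n)" using Cc_alt[OF n2] .
    have Cn1M: "lmodule (C (n - 1))" using CM n2 by simp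
    obtain P'' q \<sigma> where P'': "fg_projective P''" and qh: "q \<in> lhom P'' (C (n - 1))"
      and qo: "q ` lcarrier P'' = lcarrier (C (n - 1))"
      and \<sigma>h: "\<sigma> \<in> lhom M P''" and \<sigma>i: "inj_on \<sigma> (lcarrier M)"
      and \<sigma>im: "\<sigma> ` lcarrier M = {z \<in> lcarrier P''. q z = lzero (C (n - 1))}"
      using modify[OF proj[OF n order.refl] Cn1M M pch[OF n2 order.refl] pco[OF n2 order.refl]] extn siC
      unfolding Cn by blast
    define Pc' where "Pc' = Pc(n := P'')"
    define pc' where "pc' = pc(n := q)"
    have Ceq: "\<And>k. k < n \<Longrightarrow> Cc M Pc' p1 pc' k = C k"
      unfolding Cc_def Pc'_def pc'_def using n2 by auto
    have ch': "chain M n Pc' p1 pc'"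
    proof
      show "lmodule M" by (rule M)
      show "1 \<le> n" by (rule n)
      show "\<And>k. 1 \<le> k \<Longrightarrow> k \<le> n \<Longrightarrow> fg_projective (Pc' k)"
        unfolding Pc'_def using proj P'' by auto
      show "p1 \<in> lhom (Pc' 1) M" unfolding Pc'_def using p1h n2 by simp
      show "p1 ` lcarrier (Pc' 1) = lcarrier M" unfolding Pc'_def using p1o n2 by simp
      show "\<And>k. 2 \<le> k \<Longrightarrow> k \<le> n \<Longrightarrow> pc' k \<in> lhom (Pc' k) (Cc M Pc' p1 pc' (k - 1))"
      proof -
        fix k :: nat assume k: "2 \<le> k" "k \<le> n"
        show "pc' k \<in> lhom (Pc' k) (Cc M Pc' p1 pc' (k - 1))"
          using Ceq[of "k - 1"] k qh pch[OF k] unfolding Pc'_def pc'_def by (cases "k = n") auto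
      qed
      show "\<And>k. 2 \<le> k \<Longrightarrow> k \<le> n \<Longrightarrow> pc' k ` lcarrier (Pc' k) = lcarrier (Cc M Pc' p1 pc' (k - 1))"
      proof -
        fix k :: nat assume k: "2 \<le> k" "k \<le> n"
        show "pc' k ` lcarrier (Pc' k) = lcarrier (Cc M Pc' p1 pc' (k - 1))"
          using Ceq[of "k - 1"] k qo pco[OF k] unfolding Pc'_def pc'_def by (cases "k = n") auto
      qed
    qed
    interpret c': chain M n Pc' p1 pc' by (rule ch')
    have "lcarrier (Cc M Pc' p1 pc' n) = {z \<in> lcarrier P''. q z = lzero (Pc (n - 1))}"
      unfolding Cc_def Pc'_def pc'_def using n2 by auto
    hence "\<sigma> ` lcarrier M = lcarrier (Cc M Pc' p1 pc' n)" unfolding \<sigma>im by simp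
    moreover have "\<sigma> \<in> lhom M (Pc' n)" unfolding Pc'_def using \<sigma>h by simp
    ultimately show ?thesis using c'.assemble \<sigma>i ev by blast
  qed
qed

theorem proposition2p2p17:
  fixes phi :: "'r::comm_ring_1 \<Rightarrow> 'a::ring_1"
    and M :: "('a, 'm) lmod"
    and n :: nat
  assumes "artin_algebra phi"
    and "n \<ge> 1"
    and "lmodule M"
    and "fin_gen M"
  shows "n_strongly_GP n M \<longleftrightarrow>
           (syzygy_stably_iso n M \<and> (\<forall>i. 1 \<le> i \<and> i \<le> n \<longrightarrow> ext_vanishes M i))"
  using forward[OF assms(3,2)] backward[OF assms(3,2)] by blast


end
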